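(* Let $P\in\mathcal E_0$, assume $\hat f,\hat g$ are estimated on an auxiliary data set independent of $(\mathbf X^{(n)},\mathbf Y^{(n)},\mathbf Z^{(n)})$, and let $K\ge1$ be fixed. Assume there exists $C>0$ with $|w_k(z)|\le C$ for all $z$ and $k=1,\dots,K$. Assume $A_fA_g=o_P(n^{-1})$, $B_f=o_P(1)$, $B_g=o_P(1)$, $\mathbb E_P[\epsilon_P^2\xi_P^2w_k(Z)^2]>0$ for all $k$, and $\mathbb E_P[\epsilon_P^2\xi_P^2]<\infty$. If there exists $k\in\{1,\dots,K\}$ with $\mathbb E_P[\epsilon_P\xi_Pw_k(Z)]\ne0$, then $\mathbb P_P(S_n\ge M)\to1$ for all $M>0$.
   Context: Let $X,Y$ be real-valued random variables and $Z$ a random vector in $\mathbb R^{d_Z}$. $\mathcal E_0$ is the set of distributions of $(X,Y,Z)$ absolutely continuous with respect to Lebesgue measure. For $P\in\mathcal E_0$: $f_P(z)=\mathbb E_P[X\mid Z=z]$, $g_P(z)=\mathbb E_P[Y\mid Z=z]$, $\epsilon_P=X-f_P(Z)$, $\xi_P=Y-g_P(Z)$, $u_P(z)=\mathbb E_P[\epsilon_P^2\mid Z=z]$, $v_P(z)=\mathbb E_P[\xi_P^2\mid Z=z]$. Data $(x_i,y_i,z_i)$, $i=1,\dots,n$, i.i.d. copies of $(X,Y,Z)$ form $(\mathbf X^{(n)},\mathbf Y^{(n)},\mathbf Z^{(n)})$; $\hat f,\hat g$ estimate $f_P,g_P$. $A_f=\frac1n\sum_i(f_P(z_i)-\hat f(z_i))^2$,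 $A_g=\frac1n\sum_i(g_P(z_i)-\hat g(z_i))^2$, $B_f=\frac1n\sum_i(f_P(z_i)-\hat f(z_i))^2v_P(z_i)$, $B_g=\frac1n\sum_i(g_P(z_i)-\hat g(z_i))^2u_P(z_i)$. For fixed measurable weight functions $w_1,\dots,w_K$, let $R_{ki}=(x_i-\hat f(z_i))(y_i-\hat g(z_i))w_k(z_i)$, $\mathbf R_k=(R_{k1},\dots,R_{kn})^T$, $\bar{\mathbf R}_k$ its coordinate mean, $T_k^{(n)}=\sqrt n\bar{\mathbf R}_k/(\frac1n\|\mathbf R_k\|_2^2-\bar{\mathbf R}_k^2)^{1/2}$ and $S_n=\max_{k=1,\dots,K}|T_k^{(n)}|$. $V_n=o_P(W_n)$ means $\mathbb P_P(|V_n/W_n|>\delta)\to0$ for all $\delta>0$. *)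

theory Defs
  imports "HOL-Probability.Probability"
begin

definition is_cond_exp_fun ::
  "'b measure \<Rightarrow> ('b \<Rightarrow> real) \<Rightarrow> ('b \<Rightarrow> 'c::topological_space) \<Rightarrow> ('c \<Rightarrow> real) \<Rightarrow> bool" where
  "is_cond_exp_fun P X Z f \<longleftrightarrow>
     integrable P X \<and> f \<in> borel_measurable borel \<and>
     (\<forall>A \<in> sets borel.
        integrable P (\<lambda>\<omega>. f (Z \<omega>) * indicator A (Z \<omega>)) \<and>
        (\<integral>\<omega>. X \<omega> * indicator A (Z \<omega>) \<partial>P) = (\<integral>\<omega>. f (Z \<omega>) * indicator A (Z \<omega>) \<partial>P))"

text \<open>Version of z \<mapsto> E[X | Z = z] for a nonnegative X (not necessarily integrable),
  via nonnegative integrals.\<close>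
definition is_cond_exp_fun_nonneg ::
  "'b measure \<Rightarrow> ('b \<Rightarrow> real) \<Rightarrow> ('b \<Rightarrow> 'c::topological_space) \<Rightarrow> ('c \<Rightarrow> real) \<Rightarrow> bool" where
  "is_cond_exp_fun_nonneg P X Z f \<longleftrightarrow>
     f \<in> borel_measurable borel \<and> (\<forall>z. 0 \<le> f z) \<and>
     (\<forall>A \<in> sets borel.
        (\<integral>\<^sup>+\<omega>. ennreal (X \<omega>) * indicator A (Z \<omega>) \<partial>P) =
        (\<integral>\<^sup>+\<omega>. ennreal (f (Z \<omega>)) * indicator A (Z \<omega>) \<partial>P))"

definition small_oP :: "'a measure \<Rightarrow> (nat \<Rightarrow> 'a \<Rightarrow> real) \<Rightarrow> (nat \<Rightarrow> real) \<Rightarrow> bool" where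
  "small_oP M V W \<longleftrightarrow>
     (\<forall>\<delta>>0. (\<lambda>n. measure M {\<omega> \<in> space M. \<bar>V n \<omega> / W n\<bar> > \<delta>}) \<longlonglongrightarrow> 0)"

text \<open>The normalised statistic T = sqrt n * mean(R) / (mean(R^2) - mean(R)^2)^(1/2)
  of the first n entries of R (division by zero yields 0, Isabelle's convention).\<close>
definition T_stat :: "nat \<Rightarrow> (nat \<Rightarrow> real) \<Rightarrow> real" where
  "T_stat n R =
     (let m = (\<Sum>i<n. R i) / real n;
          s2 = (\<Sum>i<n. (R i)\<^sup>2) / real n - m\<^sup>2
      in sqrt (real n) * m / sqrt s2)"

definition R_res :: "('z \<Rightarrow> real) \<Rightarrow> ('z \<Rightarrow> real) \<Rightarrow> ('z \<Rightarrow> real)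
     \<Rightarrow> (nat \<Rightarrow> real) \<Rightarrow> (nat \<Rightarrow> real) \<Rightarrow> (nat \<Rightarrow> 'z) \<Rightarrow> nat \<Rightarrow> real" where
  "R_res fh gh wk xs ys zs i = (xs i - fh (zs i)) * (ys i - gh (zs i)) * wk (zs i)"

definition S_stat :: "nat \<Rightarrow> nat \<Rightarrow> ('z \<Rightarrow> real) \<Rightarrow> ('z \<Rightarrow> real) \<Rightarrow> (nat \<Rightarrow> 'z \<Rightarrow> real)
     \<Rightarrow> (nat \<Rightarrow> real) \<Rightarrow> (nat \<Rightarrow> real) \<Rightarrow> (nat \<Rightarrow> 'z) \<Rightarrow> real" where
  "S_stat K n fh gh w xs ys zs = Max ((\<lambda>k. \<bar>T_stat n (R_res fh gh (w k) xs ys zs)\<bar>) ` {1..K})"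

end

theory Submission
  imports Defs
begin


lemma cond_exp_nn_ext:
  fixes Q :: "'c measure" and U V :: "'c \<Rightarrow> ennreal" and ZZ :: "'c \<Rightarrow> 'zz::topological_space"
  assumes ZZ[measurable]: "ZZ \<in> measurable Q borel" and U[measurable]: "U \<in> borel_measurable Q"
    and V[measurable]: "V \<in> borel_measurable Q"
    and ind: "\<And>A. A \<in> sets borel \<Longrightarrow> (\<integral>\<^sup>+p. U p * indicator A (ZZ p) \<partial>Q) = (\<integral>\<^sup>+p. V p * indicator A (ZZ p) \<partial>Q)"
    and h: "h \<in> borel_measurable borel"
  shows "(\<integral>\<^sup>+p. U p * h (ZZ p) \<partial>Q) = (\<integral>\<^sup>+p. V p * h (ZZ p) \<partial>Q)"
  using h
proof (induct rule: borel_measurable_induct)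
  case (cong f g)
  then have "f = g" by (auto simp: fun_eq_iff)
  then show ?case using cong by simp
next
  case (set A)
  then show ?case by (rule ind)
next
  case (mult u c)
  note [measurable] = mult(2)
  have "(\<integral>\<^sup>+p. U p * (c * u (ZZ p)) \<partial>Q) = c * (\<integral>\<^sup>+p. U p * u (ZZ p) \<partial>Q)"
    by (subst nn_integral_cmult[symmetric]) (auto simp: ac_simps)
  moreover have "(\<integral>\<^sup>+p. V p * (c * u (ZZ p)) \<partial>Q) = c * (\<integral>\<^sup>+p. V p * u (ZZ p) \<partial>Q)"
    by (subst nn_integral_cmult[symmetric]) (auto simp: ac_simps)
  ultimately show ?case using mult(4) by simp
next
  case (add u v)
  note [measurable] = add(1) add(4)
  have "(\<integral>\<^sup>+p. U p * (v (ZZ p) + u (ZZ p)) \<partial>Q) = (\<integral>\<^sup>+p. U p * v (ZZ p) \<partial>Q) + (\<integral>\<^sup>+p. U p * u (ZZ p) \<partial>Q)"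
    by (subst nn_integral_add[symmetric]) (auto simp: distrib_left)
  moreover have "(\<integral>\<^sup>+p. V p * (v (ZZ p) + u (ZZ p)) \<partial>Q) = (\<integral>\<^sup>+p. V p * v (ZZ p) \<partial>Q) + (\<integral>\<^sup>+p. V p * u (ZZ p) \<partial>Q)"
    by (subst nn_integral_add[symmetric]) (auto simp: distrib_left)
  ultimately show ?case using add(3) add(7) by simp
next
  case (seq F)
  note [measurable] = seq(1)
  have inc1: "incseq (\<lambda>i p. U p * F i (ZZ p))" and inc2: "incseq (\<lambda>i p. V p * F i (ZZ p))"
    using seq(4) by (auto simp: incseq_def le_fun_def intro!: mult_left_mono)
  have "(\<integral>\<^sup>+p. U p * (SUP i. F i) (ZZ p) \<partial>Q) = (\<integral>\<^sup>+p. (SUP i. U p * F i (ZZ p)) \<partial>Q)"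
    by (simp add: SUP_mult_left_ennreal image_comp)
  also have "\<dots> = (SUP i. \<integral>\<^sup>+p. U p * F i (ZZ p) \<partial>Q)"
    by (rule nn_integral_monotone_convergence_SUP[OF inc1]) measurable
  also have "\<dots> = (SUP i. \<integral>\<^sup>+p. V p * F i (ZZ p) \<partial>Q)"
    using seq(3) by simp
  also have "\<dots> = (\<integral>\<^sup>+p. (SUP i. V p * F i (ZZ p)) \<partial>Q)"
    by (rule nn_integral_monotone_convergence_SUP[OF inc2, symmetric]) measurable
  also have "\<dots> = (\<integral>\<^sup>+p. V p * (SUP i. F i) (ZZ p) \<partial>Q)"
    by (simp add: SUP_mult_left_ennreal image_comp)
  finally show ?case .
qed

lemma ennreal_avg:
  fixes A B :: "nat \<Rightarrow> real" and I :: ennreal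
  assumes "\<And>i. 0 \<le> A i" "\<And>i. 0 \<le> B i"
  shows "ennreal ((\<Sum>i<n. A i * B i) / real n) * I = ennreal (1 / real n) * (\<Sum>i<n. ennreal (A i) * (ennreal (B i) * I))"
proof -
  have "(\<Sum>i<n. A i * B i) / real n = (1 / real n) * (\<Sum>i<n. A i * B i)" by simp
  then have "ennreal ((\<Sum>i<n. A i * B i) / real n) = ennreal (1 / real n) * ennreal (\<Sum>i<n. A i * B i)"
    by (simp add: ennreal_mult'[symmetric])
  also have "ennreal (\<Sum>i<n. A i * B i) = (\<Sum>i<n. ennreal (A i) * ennreal (B i))"
    by (subst sum_ennreal[symmetric]) (auto simp: assms ennreal_mult)
  finally show ?thesis by (simp add: sum_distrib_right mult.assoc)
qed

lemma tendsto0_by_eps: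
  fixes p :: "nat \<Rightarrow> real"
  assumes "\<And>n. 0 \<le> p n" "\<And>r. 0 < r \<Longrightarrow> eventually (\<lambda>n. p n \<le> r) sequentially"
  shows "p \<longlonglongrightarrow> 0"
proof (rule order_tendstoI)
  fix a :: real assume "a < 0" then show "eventually (\<lambda>n. a < p n) sequentially"
    using assms(1) by (intro always_eventually) (auto intro: less_le_trans)
next
  fix a :: real assume "0 < a"
  then have "eventually (\<lambda>n. p n \<le> a / 2) sequentially" by (intro assms(2)) simp
  then show "eventually (\<lambda>n. p n < a) sequentially" by eventually_elim (use \<open>0 < a\<close> in simp)
qed

lemma (in prob_space) prob_le_union:
  assumes "A \<subseteq> B \<union> C" "B \<in> events" "C \<in> events"
  shows "prob A \<le> prob B + prob C"
proof -
  have "prob A \<le> prob (B \<union> C)" using assms by (intro finite_measure_mono) auto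
  also have "\<dots> \<le> prob B + prob C" using assms by (intro measure_subadditive) auto
  finally show ?thesis .
qed

lemma (in prob_space) markov_nn:
  fixes F :: "'a \<Rightarrow> real" and I :: "'a \<Rightarrow> ennreal"
  assumes S: "S \<in> events" and t: "0 < t" and b: "0 \<le> b"
    and pt: "\<And>\<omega>. \<omega> \<in> S \<Longrightarrow> ennreal t \<le> I \<omega>"
    and Im: "I \<in> borel_measurable M"
    and bnd: "(\<integral>\<^sup>+\<omega>. I \<omega> \<partial>M) \<le> ennreal b"
  shows "prob S \<le> b / t"
proof -
  have "ennreal t * emeasure M S = (\<integral>\<^sup>+\<omega>. ennreal t * indicator S \<omega> \<partial>M)"
    using S by (simp add: nn_integral_cmult_indicator)
  also have "\<dots> \<le> (\<integral>\<^sup>+\<omega>. I \<omega> \<partial>M)"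
    by (rule nn_integral_mono) (auto simp: indicator_def pt)
  also have "\<dots> \<le> ennreal b" by (rule bnd)
  finally have "ennreal (t * prob S) \<le> ennreal b"
    using t by (simp add: emeasure_eq_measure ennreal_mult)
  then have "t * prob S \<le> b" using b by simp
  then show ?thesis using t by (simp add: field_simps)
qed

lemma hyper_null:
  fixes F G W :: "'z::euclidean_space \<Rightarrow> real"
  assumes [measurable]: "F \<in> borel_measurable borel" "G \<in> borel_measurable borel" "W \<in> borel_measurable borel"
    and r: "r \<noteq> 0"
  shows "{p :: real \<times> real \<times> 'z. (fst p - F (snd (snd p))) * (fst (snd p) - G (snd (snd p))) * W (snd (snd p)) = r} \<in> null_sets lborel"
proof -
  define S where "S = {p :: real \<times> real \<times> 'z. (fst p - F (snd (snd p))) * (fst (snd p) - G (snd (snd p))) * W (snd (snd p)) = r}"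
  have S3: "S \<in> sets (borel \<Otimes>\<^sub>M borel \<Otimes>\<^sub>M borel)"
  proof -
    have "S = {p \<in> space (borel \<Otimes>\<^sub>M borel \<Otimes>\<^sub>M borel). (fst p - F (snd (snd p))) * (fst (snd p) - G (snd (snd p))) * W (snd (snd p)) = r}"
      by (auto simp: S_def space_pair_measure)
    also have "\<dots> \<in> sets (borel \<Otimes>\<^sub>M borel \<Otimes>\<^sub>M borel)" by measurable
    finally show ?thesis .
  qed
  have Sl: "S \<in> sets (lborel \<Otimes>\<^sub>M lborel)"
  proof -
    have b3: "(borel :: (real \<times> real \<times> 'z) measure) = borel \<Otimes>\<^sub>M borel \<Otimes>\<^sub>M borel"
      by (simp add: borel_prod)
    have "sets (lborel \<Otimes>\<^sub>M lborel :: (real \<times> real \<times> 'z) measure) = sets (borel \<Otimes>\<^sub>M borel \<Otimes>\<^sub>M borel)"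
      by (simp only: lborel_prod sets_lborel b3)
    then show ?thesis using S3 by simp
  qed
  have pst: "pair_sigma_finite (lborel :: real measure) (lborel :: (real \<times> 'z) measure)"
    by (simp add: pair_sigma_finite_def lborel.sigma_finite_measure_axioms)
  have sec: "emeasure lborel ((\<lambda>x. (x, q)) -` S) = 0" for q :: "real \<times> 'z"
  proof (cases "(fst q - G (snd q)) * W (snd q) = 0")
    case True
    then have "(\<lambda>x. (x, q)) -` S = {}" using r by (auto simp: S_def mult.assoc)
    then show ?thesis by simp
  next
    case False
    then have "(\<lambda>x. (x, q)) -` S = {F (snd q) + r / ((fst q - G (snd q)) * W (snd q))}"
      by (auto simp: S_def mult.assoc field_simps)
    then show ?thesis by simp
  qed
  have "emeasure lborel S = emeasure (lborel \<Otimes>\<^sub>M lborel) S" by (simp add: lborel_prod)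
  also have "\<dots> = (\<integral>\<^sup>+q. emeasure lborel ((\<lambda>x. (x, q)) -` S) \<partial>lborel)"
    by (rule pair_sigma_finite.emeasure_pair_measure_alt2[OF pst Sl])
  also have "\<dots> = 0" by (simp add: sec)
  finally have "emeasure lborel S = 0" .
  moreover have "S \<in> sets lborel" using Sl by (simp only: lborel_prod)
  ultimately show ?thesis unfolding S_def[symmetric] by (simp add: null_sets_def)
qed

lemma avg_abs_bound:
  fixes u W :: "nat \<Rightarrow> real"
  assumes n: "0 < n" and W: "\<And>i. i < n \<Longrightarrow> \<bar>W i\<bar> \<le> C"
  shows "\<bar>(\<Sum>i<n. u i * W i) / real n\<bar> \<le> C * sqrt ((\<Sum>i<n. (u i)\<^sup>2) / real n)"
proof -
  have C0: "0 \<le> C" using W[of 0] n by auto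
  have "\<bar>\<Sum>i<n. u i * W i\<bar> \<le> (\<Sum>i<n. \<bar>u i\<bar> * C)"
    by (rule order_trans[OF sum_abs]) (auto intro!: sum_mono simp: abs_mult intro: mult_left_mono W)
  also have "\<dots> = C * (\<Sum>i<n. \<bar>u i\<bar>)" by (simp add: sum_distrib_left mult.commute)
  finally have a: "\<bar>\<Sum>i<n. u i * W i\<bar> \<le> C * (\<Sum>i<n. \<bar>u i\<bar>)" .
  have "(\<Sum>i<n. \<bar>u i\<bar>)\<^sup>2 \<le> (\<Sum>i<n. \<bar>u i\<bar>\<^sup>2) * real n"
    using sum_squared_le_sum_of_squares[of "\<lambda>i. \<bar>u i\<bar>" "{..<n}"] by simp
  then have "(\<Sum>i<n. \<bar>u i\<bar>) \<le> sqrt ((\<Sum>i<n. (u i)\<^sup>2) * real n)"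
    by (simp add: real_le_rsqrt)
  also have "\<dots> = real n * sqrt ((\<Sum>i<n. (u i)\<^sup>2) / real n)"
  proof -
    have eq: "(\<Sum>i<n. (u i)\<^sup>2) * real n = (real n)\<^sup>2 * ((\<Sum>i<n. (u i)\<^sup>2) / real n)"
      using n by (simp add: power2_eq_square field_simps)
    show ?thesis by (subst eq, subst real_sqrt_mult, simp)
  qed
  finally have b: "(\<Sum>i<n. \<bar>u i\<bar>) \<le> real n * sqrt ((\<Sum>i<n. (u i)\<^sup>2) / real n)" .
  have "\<bar>(\<Sum>i<n. u i * W i) / real n\<bar> = \<bar>\<Sum>i<n. u i * W i\<bar> / real n" by simp
  also have "\<dots> \<le> C * (real n * sqrt ((\<Sum>i<n. (u i)\<^sup>2) / real n)) / real n"
    using a b C0 n by (intro divide_right_mono order_trans[OF a] mult_left_mono) auto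
  also have "\<dots> = C * sqrt ((\<Sum>i<n. (u i)\<^sup>2) / real n)" using n by simp
  finally show ?thesis .
qed

lemma avg_abs_bound2:
  fixes a b W :: "nat \<Rightarrow> real"
  assumes n: "0 < n" and W: "\<And>i. i < n \<Longrightarrow> \<bar>W i\<bar> \<le> C"
  shows "\<bar>(\<Sum>i<n. a i * b i * W i) / real n\<bar> \<le> C * sqrt (((\<Sum>i<n. (a i)\<^sup>2) / real n) * ((\<Sum>i<n. (b i)\<^sup>2) / real n))"
proof -
  have C0: "0 \<le> C" using W[of 0] n by auto
  have "\<bar>\<Sum>i<n. a i * b i * W i\<bar> \<le> (\<Sum>i<n. \<bar>a i\<bar> * \<bar>b i\<bar> * C)"
    by (rule order_trans[OF sum_abs]) (auto intro!: sum_mono simp: abs_mult intro: mult_left_mono W)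
  also have "\<dots> = C * (\<Sum>i<n. \<bar>a i\<bar> * \<bar>b i\<bar>)" by (simp add: sum_distrib_left mult.commute)
  finally have s1: "\<bar>\<Sum>i<n. a i * b i * W i\<bar> \<le> C * (\<Sum>i<n. \<bar>a i\<bar> * \<bar>b i\<bar>)" .
  have "(\<Sum>i<n. \<bar>a i\<bar> * \<bar>b i\<bar>)\<^sup>2 \<le> (\<Sum>i<n. \<bar>a i\<bar>\<^sup>2) * (\<Sum>i<n. \<bar>b i\<bar>\<^sup>2)"
    by (rule Cauchy_Schwarz_ineq_sum)
  then have s2: "(\<Sum>i<n. \<bar>a i\<bar> * \<bar>b i\<bar>) \<le> sqrt ((\<Sum>i<n. (a i)\<^sup>2) * (\<Sum>i<n. (b i)\<^sup>2))"
    by (simp add: real_le_rsqrt)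
  have s3: "sqrt ((\<Sum>i<n. (a i)\<^sup>2) * (\<Sum>i<n. (b i)\<^sup>2)) = real n * sqrt (((\<Sum>i<n. (a i)\<^sup>2) / real n) * ((\<Sum>i<n. (b i)\<^sup>2) / real n))"
  proof -
    have eq: "(\<Sum>i<n. (a i)\<^sup>2) * (\<Sum>i<n. (b i)\<^sup>2) = (real n)\<^sup>2 * (((\<Sum>i<n. (a i)\<^sup>2) / real n) * ((\<Sum>i<n. (b i)\<^sup>2) / real n))"
      using n by (simp add: power2_eq_square field_simps)
    show ?thesis by (subst eq, subst real_sqrt_mult, simp)
  qed
  have "\<bar>(\<Sum>i<n. a i * b i * W i) / real n\<bar> = \<bar>\<Sum>i<n. a i * b i * W i\<bar> / real n" by simp
  also have "\<dots> \<le> C * (real n * sqrt (((\<Sum>i<n. (a i)\<^sup>2) / real n) * ((\<Sum>i<n. (b i)\<^sup>2) / real n))) / real n"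
    using s1 s2 s3 C0 n by (intro divide_right_mono order_trans[OF s1] mult_left_mono) auto
  also have "\<dots> = C * sqrt (((\<Sum>i<n. (a i)\<^sup>2) / real n) * ((\<Sum>i<n. (b i)\<^sup>2) / real n))" using n by simp
  finally show ?thesis .
qed

lemma sum_sq_prod_le:
  fixes a b :: "nat \<Rightarrow> real"
  shows "(\<Sum>i<n. (a i)\<^sup>2 * (b i)\<^sup>2) \<le> (\<Sum>i<n. (a i)\<^sup>2) * (\<Sum>i<n. (b i)\<^sup>2)"
proof -
  have "(\<Sum>i<n. (a i)\<^sup>2 * (b i)\<^sup>2) \<le> (\<Sum>i<n. (a i)\<^sup>2 * (\<Sum>j<n. (b j)\<^sup>2))"
    by (intro sum_mono mult_left_mono) (auto intro: member_le_sum)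
  also have "\<dots> = (\<Sum>i<n. (a i)\<^sup>2) * (\<Sum>i<n. (b i)\<^sup>2)" by (simp add: sum_distrib_right)
  finally show ?thesis .
qed

lemma sq4: "((p::real) + q + r + s)\<^sup>2 \<le> 4 * (p\<^sup>2 + q\<^sup>2 + r\<^sup>2 + s\<^sup>2)"
proof -
  have "0 \<le> (p-q)\<^sup>2 + (p-r)\<^sup>2 + (p-s)\<^sup>2 + (q-r)\<^sup>2 + (q-s)\<^sup>2 + (r-s)\<^sup>2" by simp
  then show ?thesis by (simp add: power2_eq_square algebra_simps)
qed

lemma var_id:
  fixes R :: "nat \<Rightarrow> real"
  assumes n: "0 < n"
  shows "(\<Sum>i<n. (R i - (\<Sum>i<n. R i) / real n)\<^sup>2) = real n * ((\<Sum>i<n. (R i)\<^sup>2) / real n - ((\<Sum>i<n. R i) / real n)\<^sup>2)"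
proof -
  define m where "m = (\<Sum>i<n. R i) / real n"
  have "(\<Sum>i<n. (R i - m)\<^sup>2) = (\<Sum>i<n. ((R i)\<^sup>2 + m\<^sup>2) - (2 * m) * R i)"
    by (rule sum.cong) (simp_all add: power2_diff)
  also have "\<dots> = (\<Sum>i<n. (R i)\<^sup>2) + real n * m\<^sup>2 - (2 * m) * (\<Sum>i<n. R i)"
    by (simp only: sum_subtractf sum.distrib sum_distrib_left[symmetric]) simp
  also have "\<dots> = (\<Sum>i<n. (R i)\<^sup>2) - 2 * m * (\<Sum>i<n. R i) + real n * m\<^sup>2" by simp
  also have "\<dots> = real n * ((\<Sum>i<n. (R i)\<^sup>2) / real n - m\<^sup>2)"
  proof -
    have "(\<Sum>i<n. R i) = real n * m" using n by (simp add: m_def)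
    then show ?thesis using n by (simp add: power2_eq_square algebra_simps)
  qed
  finally show ?thesis by (simp only: m_def)
qed

lemma var_nonneg:
  fixes R :: "nat \<Rightarrow> real"
  assumes n: "0 < n"
  shows "0 \<le> (\<Sum>i<n. (R i)\<^sup>2) / real n - ((\<Sum>i<n. R i) / real n)\<^sup>2"
proof -
  have "0 \<le> (\<Sum>i<n. (R i - (\<Sum>i<n. R i) / real n)\<^sup>2)" by (intro sum_nonneg) simp
  then have "0 \<le> real n * ((\<Sum>i<n. (R i)\<^sup>2) / real n - ((\<Sum>i<n. R i) / real n)\<^sup>2)"
    by (simp only: var_id[OF n])
  then show ?thesis using n by (simp add: zero_le_mult_iff)
qed

lemma var_zero:
  fixes R :: "nat \<Rightarrow> real"
  assumes n: "0 < n" and s: "(\<Sum>i<n. (R i)\<^sup>2) / real n - ((\<Sum>i<n. R i) / real n)\<^sup>2 = 0"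
  shows "\<forall>i<n. R i = (\<Sum>i<n. R i) / real n"
proof -
  define m where "m = (\<Sum>i<n. R i) / real n"
  have "(\<Sum>i<n. (R i - m)\<^sup>2) = (\<Sum>i<n. ((R i)\<^sup>2 + m\<^sup>2) - (2 * m) * R i)"
    by (rule sum.cong) (simp_all add: power2_diff)
  also have "\<dots> = (\<Sum>i<n. (R i)\<^sup>2) + real n * m\<^sup>2 - (2 * m) * (\<Sum>i<n. R i)"
    by (simp only: sum_subtractf sum.distrib sum_distrib_left[symmetric]) simp
  also have "\<dots> = (\<Sum>i<n. (R i)\<^sup>2) - 2 * m * (\<Sum>i<n. R i) + real n * m\<^sup>2" by simp
  also have "\<dots> = real n * ((\<Sum>i<n. (R i)\<^sup>2) / real n - m\<^sup>2)"
  proof -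
    have "(\<Sum>i<n. R i) = real n * m" using n by (simp add: m_def)
    then show ?thesis using n by (simp add: power2_eq_square algebra_simps)
  qed
  also have "\<dots> = 0" using s by (simp add: m_def)
  finally have "(\<Sum>i<n. (R i - m)\<^sup>2) = 0" .
  then have "\<forall>i\<in>{..<n}. (R i - m)\<^sup>2 = 0" using sum_nonneg_eq_0_iff[of "{..<n}" "\<lambda>i. (R i - m)\<^sup>2"] by simp
  then have "\<forall>i<n. R i = m" by simp
  then show ?thesis by (simp only: m_def)
qed


lemma T_stat_cong: "(\<And>i. i < n \<Longrightarrow> R i = R' i) \<Longrightarrow> T_stat n R = T_stat n R'"
proof -
  assume h: "\<And>i. i < n \<Longrightarrow> R i = R' i"
  have "(\<Sum>i<n. R i) = (\<Sum>i<n. R' i)" by (rule sum.cong) (auto simp: h)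
  moreover have "(\<Sum>i<n. (R i)\<^sup>2) = (\<Sum>i<n. (R' i)\<^sup>2)" by (rule sum.cong) (auto simp: h)
  ultimately show ?thesis unfolding T_stat_def Let_def by simp
qed

lemma T_lower:
  fixes R :: "nat \<Rightarrow> real"
  assumes n: "0 < n"
    and s_pos: "0 < (\<Sum>i<n. (R i)\<^sup>2) / real n - ((\<Sum>i<n. R i) / real n)\<^sup>2"
    and s_le: "(\<Sum>i<n. (R i)\<^sup>2) / real n - ((\<Sum>i<n. R i) / real n)\<^sup>2 \<le> Q0"
    and g: "0 \<le> g" "g \<le> \<bar>(\<Sum>i<n. R i) / real n\<bar>"
  shows "sqrt (real n) * g / sqrt Q0 \<le> \<bar>T_stat n R\<bar>"
proof -
  define m where "m = (\<Sum>i<n. R i) / real n"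
  define s2 where "s2 = (\<Sum>i<n. (R i)\<^sup>2) / real n - m\<^sup>2"
  have T: "\<bar>T_stat n R\<bar> = sqrt (real n) * \<bar>m\<bar> / sqrt s2"
    unfolding T_stat_def Let_def m_def[symmetric] s2_def[symmetric] using s_pos
    by (simp add: abs_mult abs_divide m_def s2_def)
  have "sqrt (real n) * g / sqrt Q0 \<le> sqrt (real n) * \<bar>m\<bar> / sqrt s2"
  proof (rule frac_le)
    have g': "g \<le> \<bar>m\<bar>" using g(2) by (simp add: m_def)
    have sp: "0 < s2" using s_pos by (simp add: s2_def m_def)
    have sl: "s2 \<le> Q0" using s_le by (simp add: s2_def m_def)
    show "0 \<le> sqrt (real n) * \<bar>m\<bar>" by simp
    show "sqrt (real n) * g \<le> sqrt (real n) * \<bar>m\<bar>" using g' by (intro mult_left_mono) auto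
    show "0 < sqrt s2" using sp by simp
    show "sqrt s2 \<le> sqrt Q0" using sl by simp
  qed
  then show ?thesis using T by simp
qed


lemma det_bounds:
  fixes e x a b W R :: "nat \<Rightarrow> real"
  assumes n: "0 < n" and W: "\<And>i. i < n \<Longrightarrow> \<bar>W i\<bar> \<le> C"
    and R: "\<And>i. R i = (e i + a i) * (x i + b i) * W i"
  shows "\<bar>(\<Sum>i<n. R i) / real n - c\<bar> \<le> \<bar>(\<Sum>i<n. e i * x i * W i) / real n - c\<bar>
      + C * sqrt ((\<Sum>i<n. (e i)\<^sup>2 * (b i)\<^sup>2) / real n) + C * sqrt ((\<Sum>i<n. (x i)\<^sup>2 * (a i)\<^sup>2) / real n)
      + C * sqrt (((\<Sum>i<n. (a i)\<^sup>2) / real n) * ((\<Sum>i<n. (b i)\<^sup>2) / real n))"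
    and "(\<Sum>i<n. (R i)\<^sup>2) / real n \<le> 4 * C\<^sup>2 * ((\<Sum>i<n. (e i)\<^sup>2 * (x i)\<^sup>2) / real n
      + (\<Sum>i<n. (e i)\<^sup>2 * (b i)\<^sup>2) / real n + (\<Sum>i<n. (x i)\<^sup>2 * (a i)\<^sup>2) / real n
      + real n * (((\<Sum>i<n. (a i)\<^sup>2) / real n) * ((\<Sum>i<n. (b i)\<^sup>2) / real n)))"
proof -
  have C0: "0 \<le> C" using W[of 0] n by auto
  have Rexp: "R i = e i * x i * W i + (e i * b i) * W i + (a i * x i) * W i + a i * b i * W i" for i
    unfolding R by (simp add: algebra_simps)
  have msplit: "(\<Sum>i<n. R i) / real n = (\<Sum>i<n. e i * x i * W i) / real n + (\<Sum>i<n. (e i * b i) * W i) / real n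
       + (\<Sum>i<n. (a i * x i) * W i) / real n + (\<Sum>i<n. a i * b i * W i) / real n"
    unfolding Rexp by (simp add: sum.distrib add_divide_distrib)
  have b2: "\<bar>(\<Sum>i<n. (e i * b i) * W i) / real n\<bar> \<le> C * sqrt ((\<Sum>i<n. (e i)\<^sup>2 * (b i)\<^sup>2) / real n)"
    using avg_abs_bound[OF n W, where u="\<lambda>i. e i * b i"] by (simp add: power_mult_distrib)
  have b3: "\<bar>(\<Sum>i<n. (a i * x i) * W i) / real n\<bar> \<le> C * sqrt ((\<Sum>i<n. (x i)\<^sup>2 * (a i)\<^sup>2) / real n)"
    using avg_abs_bound[OF n W, where u="\<lambda>i. a i * x i"] by (simp add: power_mult_distrib mult.commute)
  have b4: "\<bar>(\<Sum>i<n. a i * b i * W i) / real n\<bar> \<le> C * sqrt (((\<Sum>i<n. (a i)\<^sup>2) / real n) * ((\<Sum>i<n. (b i)\<^sup>2) / real n))"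
    by (rule avg_abs_bound2[OF n W])
  show "\<bar>(\<Sum>i<n. R i) / real n - c\<bar> \<le> \<bar>(\<Sum>i<n. e i * x i * W i) / real n - c\<bar>
      + C * sqrt ((\<Sum>i<n. (e i)\<^sup>2 * (b i)\<^sup>2) / real n) + C * sqrt ((\<Sum>i<n. (x i)\<^sup>2 * (a i)\<^sup>2) / real n)
      + C * sqrt (((\<Sum>i<n. (a i)\<^sup>2) / real n) * ((\<Sum>i<n. (b i)\<^sup>2) / real n))"
    unfolding msplit using b2 b3 b4 by linarith
  have Rsq: "(R i)\<^sup>2 \<le> 4 * C\<^sup>2 * ((e i)\<^sup>2 * (x i)\<^sup>2 + (e i)\<^sup>2 * (b i)\<^sup>2 + (x i)\<^sup>2 * (a i)\<^sup>2 + (a i)\<^sup>2 * (b i)\<^sup>2)" if i: "i < n" for i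
  proof -
    have "(R i)\<^sup>2 = (e i * x i + e i * b i + a i * x i + a i * b i)\<^sup>2 * (W i)\<^sup>2"
    proof -
      have "R i = (e i * x i + e i * b i + a i * x i + a i * b i) * W i" unfolding R by (simp add: algebra_simps)
      then show ?thesis by (simp add: power_mult_distrib)
    qed
    also have "\<dots> \<le> (4 * ((e i)\<^sup>2 * (x i)\<^sup>2 + (e i)\<^sup>2 * (b i)\<^sup>2 + (x i)\<^sup>2 * (a i)\<^sup>2 + (a i)\<^sup>2 * (b i)\<^sup>2)) * C\<^sup>2"
    proof (rule mult_mono)
      show "(e i * x i + e i * b i + a i * x i + a i * b i)\<^sup>2 \<le> 4 * ((e i)\<^sup>2 * (x i)\<^sup>2 + (e i)\<^sup>2 * (b i)\<^sup>2 + (x i)\<^sup>2 * (a i)\<^sup>2 + (a i)\<^sup>2 * (b i)\<^sup>2)"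
        using sq4[of "e i * x i" "e i * b i" "a i * x i" "a i * b i"] by (simp add: power_mult_distrib mult_ac)
      show "(W i)\<^sup>2 \<le> C\<^sup>2" using W[OF i] C0 by (metis abs_le_square_iff abs_of_nonneg)
    qed auto
    finally show ?thesis by (simp add: algebra_simps)
  qed
  have "(\<Sum>i<n. (R i)\<^sup>2) \<le> (\<Sum>i<n. 4 * C\<^sup>2 * ((e i)\<^sup>2 * (x i)\<^sup>2 + (e i)\<^sup>2 * (b i)\<^sup>2 + (x i)\<^sup>2 * (a i)\<^sup>2 + (a i)\<^sup>2 * (b i)\<^sup>2))"
    by (intro sum_mono Rsq) simp
  also have "\<dots> = 4 * C\<^sup>2 * ((\<Sum>i<n. (e i)\<^sup>2 * (x i)\<^sup>2) + (\<Sum>i<n. (e i)\<^sup>2 * (b i)\<^sup>2) + (\<Sum>i<n. (x i)\<^sup>2 * (a i)\<^sup>2) + (\<Sum>i<n. (a i)\<^sup>2 * (b i)\<^sup>2))"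
    by (simp only: sum_distrib_left[symmetric] sum.distrib)
  also have "\<dots> \<le> 4 * C\<^sup>2 * ((\<Sum>i<n. (e i)\<^sup>2 * (x i)\<^sup>2) + (\<Sum>i<n. (e i)\<^sup>2 * (b i)\<^sup>2) + (\<Sum>i<n. (x i)\<^sup>2 * (a i)\<^sup>2) + (\<Sum>i<n. (a i)\<^sup>2) * (\<Sum>i<n. (b i)\<^sup>2))"
    using sum_sq_prod_le[of a b n] by (intro mult_left_mono) auto
  finally have "(\<Sum>i<n. (R i)\<^sup>2) / real n \<le> 4 * C\<^sup>2 * ((\<Sum>i<n. (e i)\<^sup>2 * (x i)\<^sup>2) + (\<Sum>i<n. (e i)\<^sup>2 * (b i)\<^sup>2) + (\<Sum>i<n. (x i)\<^sup>2 * (a i)\<^sup>2) + (\<Sum>i<n. (a i)\<^sup>2) * (\<Sum>i<n. (b i)\<^sup>2)) / real n"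
    using n by (intro divide_right_mono) auto
  also have "\<dots> = 4 * C\<^sup>2 * ((\<Sum>i<n. (e i)\<^sup>2 * (x i)\<^sup>2) / real n
      + (\<Sum>i<n. (e i)\<^sup>2 * (b i)\<^sup>2) / real n + (\<Sum>i<n. (x i)\<^sup>2 * (a i)\<^sup>2) / real n
      + real n * (((\<Sum>i<n. (a i)\<^sup>2) / real n) * ((\<Sum>i<n. (b i)\<^sup>2) / real n)))"
    using n by (simp add: field_simps power2_eq_square)
  finally show "(\<Sum>i<n. (R i)\<^sup>2) / real n \<le> 4 * C\<^sup>2 * ((\<Sum>i<n. (e i)\<^sup>2 * (x i)\<^sup>2) / real n
      + (\<Sum>i<n. (e i)\<^sup>2 * (b i)\<^sup>2) / real n + (\<Sum>i<n. (x i)\<^sup>2 * (a i)\<^sup>2) / real n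
      + real n * (((\<Sum>i<n. (a i)\<^sup>2) / real n) * ((\<Sum>i<n. (b i)\<^sup>2) / real n)))" .
qed


lemma tendsto1_by_eps:
  fixes p :: "nat \<Rightarrow> real"
  assumes "\<And>n. p n \<le> 1" "\<And>r. 0 < r \<Longrightarrow> eventually (\<lambda>n. 1 - r \<le> p n) sequentially"
  shows "p \<longlonglongrightarrow> 1"
proof (rule order_tendstoI)
  fix a :: real assume "1 < a" then show "eventually (\<lambda>n. p n < a) sequentially"
    using assms(1) by (intro always_eventually) (auto intro: le_less_trans)
next
  fix a :: real assume "a < 1"
  then have "eventually (\<lambda>n. 1 - (1 - a) / 2 \<le> p n) sequentially" by (intro assms(2)) simp
  then show "eventually (\<lambda>n. a < p n) sequentially"
  proof (rule eventually_mono)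
    fix n assume "1 - (1 - a) / 2 \<le> p n" then show "a < p n" using \<open>a < 1\<close> by (simp add: field_simps)
  qed
qed

lemma ev_sqrt_ge: "eventually (\<lambda>n. B \<le> sqrt (real n)) sequentially"
proof (rule eventually_sequentiallyI[of "nat \<lceil>B\<^sup>2\<rceil>"])
  fix n assume "nat \<lceil>B\<^sup>2\<rceil> \<le> n"
  then have "B\<^sup>2 \<le> real n" by linarith
  then have "sqrt (B\<^sup>2) \<le> sqrt (real n)" by (rule real_sqrt_le_mono)
  then show "B \<le> sqrt (real n)" by (metis abs_ge_self order_trans real_sqrt_abs)
qed


locale cor2 =
  fixes M :: "'a measure"
    and P :: "(real \<times> real \<times> 'z::euclidean_space) measure"
    and x y :: "nat \<Rightarrow> nat \<Rightarrow> 'a \<Rightarrow> real"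
    and z :: "nat \<Rightarrow> nat \<Rightarrow> 'a \<Rightarrow> 'z"
    and N :: "nat \<Rightarrow> 'b measure"
    and aux :: "nat \<Rightarrow> 'a \<Rightarrow> 'b"
    and fhat ghat :: "nat \<Rightarrow> 'b \<Rightarrow> 'z \<Rightarrow> real"
    and fP gP uP vP :: "'z \<Rightarrow> real"
    and w :: "nat \<Rightarrow> 'z \<Rightarrow> real"
    and K :: nat and C :: real
  assumes M: "prob_space M"
    and P_prob: "prob_space P" and P_sets: "sets P = sets borel"
    and P_ac: "absolutely_continuous lborel P"
    and fP: "is_cond_exp_fun P (\<lambda>(x', y', z'). x') (\<lambda>(x', y', z'). z') fP"
    and gP: "is_cond_exp_fun P (\<lambda>(x', y', z'). y') (\<lambda>(x', y', z'). z') gP"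
    and uP: "is_cond_exp_fun_nonneg P (\<lambda>(x', y', z'). (x' - fP z')\<^sup>2) (\<lambda>(x', y', z'). z') uP"
    and vP: "is_cond_exp_fun_nonneg P (\<lambda>(x', y', z'). (y' - gP z')\<^sup>2) (\<lambda>(x', y', z'). z') vP"
    and data_rv: "\<And>n i. i < n \<Longrightarrow> (\<lambda>\<omega>. (x n i \<omega>, y n i \<omega>, z n i \<omega>)) \<in> borel_measurable M"
    and data_law: "\<And>n i. i < n \<Longrightarrow> distr M borel (\<lambda>\<omega>. (x n i \<omega>, y n i \<omega>, z n i \<omega>)) = P"
    and data_indep: "\<And>n. prob_space.indep_vars M (\<lambda>_. borel)
                        (\<lambda>i \<omega>. (x n i \<omega>, y n i \<omega>, z n i \<omega>)) {..<n}"
    and aux_rv: "\<And>n. aux n \<in> measurable M (N n)"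
    and fhat_meas: "\<And>n. case_prod (fhat n) \<in> borel_measurable (N n \<Otimes>\<^sub>M borel)"
    and ghat_meas: "\<And>n. case_prod (ghat n) \<in> borel_measurable (N n \<Otimes>\<^sub>M borel)"
    and aux_indep: "\<And>n. prob_space.indep_set M
        (sigma_sets (space M) {aux n -` A \<inter> space M | A. A \<in> sets (N n)})
        (sigma_sets (space M)
           {(\<lambda>\<omega>. \<lambda>i\<in>{..<n}. (x n i \<omega>, y n i \<omega>, z n i \<omega>)) -` A \<inter> space M
             | A. A \<in> sets (Pi\<^sub>M {..<n} (\<lambda>_. borel))})"
    and K: "1 \<le> K"
    and w_meas: "\<And>k. w k \<in> borel_measurable borel"
    and C: "C > 0" and w_bdd: "\<And>k zz. k \<in> {1..K} \<Longrightarrow> \<bar>w k zz\<bar> \<le> C"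
    and AfAg: "small_oP M
        (\<lambda>n \<omega>. ((\<Sum>i<n. (fP (z n i \<omega>) - fhat n (aux n \<omega>) (z n i \<omega>))\<^sup>2) / real n) *
               ((\<Sum>i<n. (gP (z n i \<omega>) - ghat n (aux n \<omega>) (z n i \<omega>))\<^sup>2) / real n))
        (\<lambda>n. 1 / real n)"
    and Bf: "small_oP M
        (\<lambda>n \<omega>. (\<Sum>i<n. (fP (z n i \<omega>) - fhat n (aux n \<omega>) (z n i \<omega>))\<^sup>2 * vP (z n i \<omega>)) / real n)
        (\<lambda>n. 1)"
    and Bg: "small_oP M
        (\<lambda>n \<omega>. (\<Sum>i<n. (gP (z n i \<omega>) - ghat n (aux n \<omega>) (z n i \<omega>))\<^sup>2 * uP (z n i \<omega>)) / real n)
        (\<lambda>n. 1)"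
    and pos_var: "\<And>k. k \<in> {1..K} \<Longrightarrow>
        (\<integral>(x', y', z'). (x' - fP z')\<^sup>2 * (y' - gP z')\<^sup>2 * (w k z')\<^sup>2 \<partial>P) > 0"
    and fin_mom: "(\<integral>\<^sup>+(x', y', z'). ennreal ((x' - fP z')\<^sup>2 * (y' - gP z')\<^sup>2) \<partial>P) < \<infinity>"
    and alt: "\<exists>k \<in> {1..K}. (\<integral>(x', y', z'). (x' - fP z') * (y' - gP z') * w k z' \<partial>P) \<noteq> 0"

begin

sublocale M: prob_space M by (rule M)
sublocale PP: prob_space P by (rule P_prob)

definition X where "X n i \<omega> = (if i < n then x n i \<omega> else 0)"
definition Y where "Y n i \<omega> = (if i < n then y n i \<omega> else 0)"
definition Z where "Z n i \<omega> = (if i < n then z n i \<omega> else 0)"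
definition dd where "dd n i \<omega> = (X n i \<omega>, Y n i \<omega>, Z n i \<omega>)"
definition D where "D n \<omega> = (\<lambda>i\<in>{..<n}. dd n i \<omega>)"

lemma data_meas: "i < n \<Longrightarrow> (\<lambda>\<omega>. (x n i \<omega>, y n i \<omega>, z n i \<omega>)) \<in> borel_measurable M"
  by (rule data_rv)

lemma X_meas[measurable]: "X n i \<in> borel_measurable M"
proof (cases "i < n")
  case True
  have "(\<lambda>\<omega>. (\<lambda>p. fst p) (x n i \<omega>, y n i \<omega>, z n i \<omega>)) \<in> borel_measurable M"
    by (rule measurable_compose[OF data_meas[OF True]], rule borel_measurable_continuous_onI, intro continuous_intros)
  moreover have "X n i = (\<lambda>\<omega>. x n i \<omega>)" using True by (simp add: X_def fun_eq_iff)
  ultimately show ?thesis by simp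
next
  case False
  then have "X n i = (\<lambda>_. 0)" by (simp add: X_def fun_eq_iff)
  then show ?thesis by simp
qed
lemma Y_meas[measurable]: "Y n i \<in> borel_measurable M"
proof (cases "i < n")
  case True
  have "(\<lambda>\<omega>. (\<lambda>p. fst (snd p)) (x n i \<omega>, y n i \<omega>, z n i \<omega>)) \<in> borel_measurable M"
    by (rule measurable_compose[OF data_meas[OF True]], rule borel_measurable_continuous_onI, intro continuous_intros)
  moreover have "Y n i = (\<lambda>\<omega>. y n i \<omega>)" using True by (simp add: Y_def fun_eq_iff)
  ultimately show ?thesis by simp
next
  case False
  then have "Y n i = (\<lambda>_. 0)" by (simp add: Y_def fun_eq_iff)
  then show ?thesis by simp
qed
lemma Z_meas[measurable]: "Z n i \<in> borel_measurable M"
proof (cases "i < n")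
  case True
  have "(\<lambda>\<omega>. (\<lambda>p. snd (snd p)) (x n i \<omega>, y n i \<omega>, z n i \<omega>)) \<in> borel_measurable M"
    by (rule measurable_compose[OF data_meas[OF True]], rule borel_measurable_continuous_onI, intro continuous_intros)
  moreover have "Z n i = (\<lambda>\<omega>. z n i \<omega>)" using True by (simp add: Z_def fun_eq_iff)
  ultimately show ?thesis by simp
next
  case False
  then have "Z n i = (\<lambda>_. 0)" by (simp add: Z_def fun_eq_iff)
  then show ?thesis by simp
qed

lemma D_eq: "D n = (\<lambda>\<omega>. \<lambda>i\<in>{..<n}. dd n i \<omega>)" by (rule ext) (simp add: D_def)

lemma dd_meas[measurable]: "dd n i \<in> borel_measurable M"
  unfolding dd_def by measurable

lemma fP_meas[measurable]: "fP \<in> borel_measurable borel" using fP by (simp add: is_cond_exp_fun_def)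
lemma gP_meas[measurable]: "gP \<in> borel_measurable borel" using gP by (simp add: is_cond_exp_fun_def)
lemma uP_meas[measurable]: "uP \<in> borel_measurable borel" using uP by (simp add: is_cond_exp_fun_nonneg_def)
lemma vP_meas[measurable]: "vP \<in> borel_measurable borel" using vP by (simp add: is_cond_exp_fun_nonneg_def)
declare w_meas[measurable] aux_rv[measurable] fhat_meas[measurable] ghat_meas[measurable]

lemma D_meas[measurable]: "D n \<in> measurable M (PiM {..<n} (\<lambda>_. borel))"
  unfolding D_def by measurable

lemma dd_law: "i < n \<Longrightarrow> distr M borel (dd n i) = P"
proof -
  assume i: "i < n"
  then have "dd n i = (\<lambda>\<omega>. (x n i \<omega>, y n i \<omega>, z n i \<omega>))"
    by (auto simp: dd_def X_def Y_def Z_def fun_eq_iff)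
  then show ?thesis using data_law[OF i] by simp
qed

lemma dd_indep: "M.indep_vars (\<lambda>_. borel) (dd n) {..<n}"
proof -
  have "M.indep_vars (\<lambda>_. borel) (dd n) {..<n} = M.indep_vars (\<lambda>_. borel) (\<lambda>i \<omega>. (x n i \<omega>, y n i \<omega>, z n i \<omega>)) {..<n}"
    by (intro M.indep_vars_cong) (auto simp: dd_def X_def Y_def Z_def fun_eq_iff)
  then show ?thesis using data_indep by simp
qed

lemma D_law: "0 < n \<Longrightarrow> distr M (PiM {..<n} (\<lambda>_. borel)) (D n) = PiM {..<n} (\<lambda>_. P)"
proof -
  assume n: "0 < n"
  have "distr M (PiM {..<n} (\<lambda>_. borel)) (\<lambda>\<omega>. \<lambda>i\<in>{..<n}. dd n i \<omega>) = PiM {..<n} (\<lambda>i. distr M borel (dd n i))"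
    using M.indep_vars_iff_distr_eq_PiM'[where I="{..<n}" and M'="\<lambda>_. borel" and X="dd n"] dd_indep n by auto
  also have "\<dots> = PiM {..<n} (\<lambda>_. P)"
    by (intro PiM_cong) (auto simp: dd_law)
  finally show ?thesis by (simp add: D_eq)
qed

lemma aux_D_law: "distr M (N n \<Otimes>\<^sub>M PiM {..<n} (\<lambda>_. borel)) (\<lambda>\<omega>. (aux n \<omega>, D n \<omega>))
   = distr M (N n) (aux n) \<Otimes>\<^sub>M distr M (PiM {..<n} (\<lambda>_. borel)) (D n)"
proof -
  have Deq: "D n = (\<lambda>\<omega>. \<lambda>i\<in>{..<n}. (x n i \<omega>, y n i \<omega>, z n i \<omega>))"
    by (auto simp: D_def dd_def X_def Y_def Z_def fun_eq_iff)
  interpret A: prob_space "distr M (N n) (aux n)" by (rule M.prob_space_distr) simp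
  interpret B: prob_space "distr M (PiM {..<n} (\<lambda>_. borel)) (D n)" by (rule M.prob_space_distr) simp
  show ?thesis
  proof (rule pair_measure_eqI[symmetric])
    show "sigma_finite_measure (distr M (N n) (aux n))" by unfold_locales
    show "sigma_finite_measure (distr M (PiM {..<n} (\<lambda>_. borel)) (D n))" by unfold_locales
    show "sets (distr M (N n) (aux n) \<Otimes>\<^sub>M distr M (PiM {..<n} (\<lambda>_. borel)) (D n)) =
      sets (distr M (N n \<Otimes>\<^sub>M PiM {..<n} (\<lambda>_. borel)) (\<lambda>\<omega>. (aux n \<omega>, D n \<omega>)))"
      by (simp cong: sets_pair_measure_cong)
    fix A B assume A: "A \<in> sets (distr M (N n) (aux n))" and B: "B \<in> sets (distr M (PiM {..<n} (\<lambda>_. borel)) (D n))"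
    then have A': "A \<in> sets (N n)" and B': "B \<in> sets (PiM {..<n} (\<lambda>_. borel))" by auto
    have "emeasure (distr M (N n \<Otimes>\<^sub>M PiM {..<n} (\<lambda>_. borel)) (\<lambda>\<omega>. (aux n \<omega>, D n \<omega>))) (A \<times> B)
        = emeasure M ((aux n -` A \<inter> space M) \<inter> (D n -` B \<inter> space M))"
      using A' B' by (subst emeasure_distr) (auto intro!: arg_cong[where f="emeasure M"])
    also have "\<dots> = M.prob (aux n -` A \<inter> space M) * M.prob (D n -` B \<inter> space M)"
    proof -
      have "M.prob ((aux n -` A \<inter> space M) \<inter> (D n -` B \<inter> space M)) = M.prob (aux n -` A \<inter> space M) * M.prob (D n -` B \<inter> space M)"
        apply (rule M.indep_setD[OF aux_indep[of n]])
        using A' B' Deq by (auto intro!: sigma_sets.Basic)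
      then show ?thesis by (simp add: M.emeasure_eq_measure ennreal_mult)
    qed
    also have "\<dots> = emeasure (distr M (N n) (aux n)) A * emeasure (distr M (PiM {..<n} (\<lambda>_. borel)) (D n)) B"
      using A' B' by (simp add: emeasure_distr M.emeasure_eq_measure ennreal_mult)
    finally show "emeasure (distr M (N n) (aux n)) A * emeasure (distr M (PiM {..<n} (\<lambda>_. borel)) (D n)) B =
       emeasure (distr M (N n \<Otimes>\<^sub>M PiM {..<n} (\<lambda>_. borel)) (\<lambda>\<omega>. (aux n \<omega>, D n \<omega>))) (A \<times> B)" by simp
  qed
qed

lemma sets_PiP: "sets (PiM I (\<lambda>_. P)) = sets (PiM I (\<lambda>_. borel))"
  by (rule sets_PiM_cong) (auto simp: P_sets)

lemma meas_PiP_cong: "measurable (PiM I (\<lambda>_. P)) KK = measurable (PiM I (\<lambda>_. borel)) KK"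
  by (rule measurable_cong_sets[OF sets_PiP refl])

interpretation PiP: product_prob_space "\<lambda>_::nat. P" by unfold_locales

lemma prod_formula:
  assumes i: "i < n" and G[measurable]: "G \<in> borel_measurable (N n \<Otimes>\<^sub>M PiM {..<n} (\<lambda>_. borel))"
  shows "(\<integral>\<^sup>+\<omega>. G (aux n \<omega>, D n \<omega>) \<partial>M) =
    (\<integral>\<^sup>+a. \<integral>\<^sup>+g. \<integral>\<^sup>+d. G (a, g(i:=d)) \<partial>P \<partial>PiM ({..<n}-{i}) (\<lambda>_. P) \<partial>distr M (N n) (aux n))"
proof -
  let ?LA = "distr M (N n) (aux n)"
  interpret LA: prob_space ?LA by (rule M.prob_space_distr) simp
  interpret PN: prob_space "PiM {..<n} (\<lambda>_. P)" by (rule prob_space_PiM) (rule P_prob)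
  have n: "0 < n" using i by simp
  have G': "G \<in> borel_measurable (?LA \<Otimes>\<^sub>M PiM {..<n} (\<lambda>_. P))"
    using G by (subst measurable_cong_sets[OF sets_pair_measure_cong[OF sets_distr sets_PiP] refl])
  have "(\<integral>\<^sup>+\<omega>. G (aux n \<omega>, D n \<omega>) \<partial>M) = (\<integral>\<^sup>+p. G p \<partial>distr M (N n \<Otimes>\<^sub>M PiM {..<n} (\<lambda>_. borel)) (\<lambda>\<omega>. (aux n \<omega>, D n \<omega>)))"
    by (subst nn_integral_distr) auto
  also have "\<dots> = (\<integral>\<^sup>+p. G p \<partial>(?LA \<Otimes>\<^sub>M PiM {..<n} (\<lambda>_. P)))"
    by (simp add: aux_D_law D_law[OF n])
  also have "\<dots> = (\<integral>\<^sup>+a. \<integral>\<^sup>+f. G (a, f) \<partial>PiM {..<n} (\<lambda>_. P) \<partial>?LA)"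
    by (rule PN.nn_integral_fst[symmetric, OF G'])
  also have "\<dots> = (\<integral>\<^sup>+a. \<integral>\<^sup>+g. \<integral>\<^sup>+d. G (a, g(i:=d)) \<partial>P \<partial>PiM ({..<n}-{i}) (\<lambda>_. P) \<partial>?LA)"
  proof (rule nn_integral_cong)
    fix a assume a: "a \<in> space ?LA"
    have ins: "{..<n} = insert i ({..<n}-{i})" using i by auto
    have Ga: "(\<lambda>f. G (a, f)) \<in> borel_measurable (PiM (insert i ({..<n}-{i})) (\<lambda>_. P))"
      using a by (subst ins[symmetric], subst meas_PiP_cong) (auto intro!: measurable_Pair2')
    show "(\<integral>\<^sup>+f. G (a, f) \<partial>PiM {..<n} (\<lambda>_. P)) = (\<integral>\<^sup>+g. \<integral>\<^sup>+d. G (a, g(i:=d)) \<partial>P \<partial>PiM ({..<n}-{i}) (\<lambda>_. P))"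
      by (subst ins, rule PiP.product_nn_integral_insert[OF _ _ Ga]) auto
  qed
  finally show ?thesis .
qed

abbreviation eps :: "real \<times> real \<times> 'z \<Rightarrow> real" where "eps p \<equiv> fst p - fP (snd (snd p))"
abbreviation xi :: "real \<times> real \<times> 'z \<Rightarrow> real" where "xi p \<equiv> fst (snd p) - gP (snd (snd p))"

lemma borel3: "(borel :: (real \<times> real \<times> 'z) measure) = borel \<Otimes>\<^sub>M borel \<Otimes>\<^sub>M borel"
  by (simp add: borel_prod)

lemma dd_meas3[measurable]: "dd n i \<in> measurable M (borel \<Otimes>\<^sub>M borel \<Otimes>\<^sub>M borel)"
  by (subst borel3[symmetric]) simp

lemma P_meas_cong: "measurable P KK = measurable (borel \<Otimes>\<^sub>M borel \<Otimes>\<^sub>M borel) KK"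
  by (rule measurable_cong_sets[OF _ refl]) (simp only: P_sets borel3[symmetric])

lemma ce_u:
  assumes h: "h \<in> borel_measurable borel"
  shows "(\<integral>\<^sup>+p. ennreal ((eps p)\<^sup>2) * h (snd (snd p)) \<partial>P) = (\<integral>\<^sup>+p. ennreal (uP (snd (snd p))) * h (snd (snd p)) \<partial>P)"
proof (rule cond_exp_nn_ext[OF _ _ _ _ h])
  show "(\<lambda>p. snd (snd p)) \<in> measurable P borel" unfolding P_meas_cong by measurable
  show "(\<lambda>p. ennreal ((eps p)\<^sup>2)) \<in> borel_measurable P" unfolding P_meas_cong by measurable
  show "(\<lambda>p. ennreal (uP (snd (snd p)))) \<in> borel_measurable P" unfolding P_meas_cong by measurable
  fix A :: "'z set" assume "A \<in> sets borel"
  then show "(\<integral>\<^sup>+p. ennreal ((eps p)\<^sup>2) * indicator A (snd (snd p)) \<partial>P) = (\<integral>\<^sup>+p. ennreal (uP (snd (snd p))) * indicator A (snd (snd p)) \<partial>P)"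
    using uP unfolding is_cond_exp_fun_nonneg_def by (simp add: case_prod_beta)
qed

lemma ce_v:
  assumes h: "h \<in> borel_measurable borel"
  shows "(\<integral>\<^sup>+p. ennreal ((xi p)\<^sup>2) * h (snd (snd p)) \<partial>P) = (\<integral>\<^sup>+p. ennreal (vP (snd (snd p))) * h (snd (snd p)) \<partial>P)"
proof (rule cond_exp_nn_ext[OF _ _ _ _ h])
  show "(\<lambda>p. snd (snd p)) \<in> measurable P borel" unfolding P_meas_cong by measurable
  show "(\<lambda>p. ennreal ((xi p)\<^sup>2)) \<in> borel_measurable P" unfolding P_meas_cong by measurable
  show "(\<lambda>p. ennreal (vP (snd (snd p)))) \<in> borel_measurable P" unfolding P_meas_cong by measurable
  fix A :: "'z set" assume "A \<in> sets borel"
  then show "(\<integral>\<^sup>+p. ennreal ((xi p)\<^sup>2) * indicator A (snd (snd p)) \<partial>P) = (\<integral>\<^sup>+p. ennreal (vP (snd (snd p))) * indicator A (snd (snd p)) \<partial>P)"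
    using vP unfolding is_cond_exp_fun_nonneg_def by (simp add: case_prod_beta)
qed

definition Zv where "Zv n \<omega> = (\<lambda>j\<in>{..<n}. Z n j \<omega>)"

lemma Zv_meas[measurable]: "Zv n \<in> measurable M (PiM {..<n} (\<lambda>_. borel))"
  unfolding Zv_def by measurable

lemma ce_omega:
  fixes U V :: "real \<times> real \<times> 'z \<Rightarrow> real"
  assumes i: "i < n" and h[measurable]: "h \<in> borel_measurable (N n \<Otimes>\<^sub>M PiM {..<n} (\<lambda>_. borel))"
    and U[measurable]: "U \<in> borel_measurable (borel \<Otimes>\<^sub>M borel \<Otimes>\<^sub>M borel)"
    and V[measurable]: "V \<in> borel_measurable (borel \<Otimes>\<^sub>M borel \<Otimes>\<^sub>M borel)"
    and ce: "\<And>k. k \<in> borel_measurable borel \<Longrightarrow>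
       (\<integral>\<^sup>+p. ennreal (U p) * k (snd (snd p)) \<partial>P) = (\<integral>\<^sup>+p. ennreal (V p) * k (snd (snd p)) \<partial>P)"
  shows "(\<integral>\<^sup>+\<omega>. ennreal (U (dd n i \<omega>)) * h (aux n \<omega>, Zv n \<omega>) \<partial>M) =
         (\<integral>\<^sup>+\<omega>. ennreal (V (dd n i \<omega>)) * h (aux n \<omega>, Zv n \<omega>) \<partial>M)"
proof -
  have Zv_D: "Zv n \<omega> = (\<lambda>j\<in>{..<n}. snd (snd (D n \<omega> j)))" for \<omega>
    by (auto simp: Zv_def D_def dd_def fun_eq_iff)
  have Ui: "U (dd n i \<omega>) = U (D n \<omega> i)" "V (dd n i \<omega>) = V (D n \<omega> i)" for \<omega>
    using i by (auto simp: D_def)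
  define GU where "GU = (\<lambda>(a, f). ennreal (U (f i)) * h (a, \<lambda>j\<in>{..<n}. snd (snd (f j))))"
  define GV where "GV = (\<lambda>(a, f). ennreal (V (f i)) * h (a, \<lambda>j\<in>{..<n}. snd (snd (f j))))"
  have GU_m: "GU \<in> borel_measurable (N n \<Otimes>\<^sub>M PiM {..<n} (\<lambda>_. borel))"
    unfolding GU_def using i by (subst borel3) measurable
  have GV_m: "GV \<in> borel_measurable (N n \<Otimes>\<^sub>M PiM {..<n} (\<lambda>_. borel))"
    unfolding GV_def using i by (subst borel3) measurable
  have "(\<integral>\<^sup>+\<omega>. ennreal (U (dd n i \<omega>)) * h (aux n \<omega>, Zv n \<omega>) \<partial>M) = (\<integral>\<^sup>+\<omega>. GU (aux n \<omega>, D n \<omega>) \<partial>M)"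
    by (simp add: GU_def Zv_D Ui)
  also have "\<dots> = (\<integral>\<^sup>+a. \<integral>\<^sup>+g. \<integral>\<^sup>+d. GU (a, g(i:=d)) \<partial>P \<partial>PiM ({..<n}-{i}) (\<lambda>_. P) \<partial>distr M (N n) (aux n))"
    by (rule prod_formula[OF i GU_m])
  also have "\<dots> = (\<integral>\<^sup>+a. \<integral>\<^sup>+g. \<integral>\<^sup>+d. GV (a, g(i:=d)) \<partial>P \<partial>PiM ({..<n}-{i}) (\<lambda>_. P) \<partial>distr M (N n) (aux n))"
  proof (rule nn_integral_cong, rule nn_integral_cong)
    fix a and g :: "nat \<Rightarrow> real \<times> real \<times> 'z" assume a: "a \<in> space (distr M (N n) (aux n))"
    define k where "k = (\<lambda>zz. h (a, \<lambda>j\<in>{..<n}. if j = i then zz else snd (snd (g j))))"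
    have km: "k \<in> borel_measurable borel"
    proof -
      have "(\<lambda>zz. \<lambda>j\<in>{..<n}. if j = i then zz else snd (snd (g j))) \<in> measurable borel (PiM {..<n} (\<lambda>_. borel))"
        by (rule measurable_restrict) auto
      then show ?thesis unfolding k_def using a
        by (intro measurable_compose[OF _ measurable_Pair2[OF h]]) auto
    qed
    have e1: "(\<lambda>j\<in>{..<n}. snd (snd ((g(i:=d)) j))) = (\<lambda>j\<in>{..<n}. if j = i then snd (snd d) else snd (snd (g j)))" for d :: "real \<times> real \<times> 'z"
      by (auto simp: fun_eq_iff)
    have e2: "(\<lambda>j\<in>{..<n}. snd (snd (if j = i then d else g j))) = (\<lambda>j\<in>{..<n}. if j = i then snd (snd d) else snd (snd (g j)))" for d :: "real \<times> real \<times> 'z"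
      by (auto simp: fun_eq_iff)
    have "(\<integral>\<^sup>+d. GU (a, g(i:=d)) \<partial>P) = (\<integral>\<^sup>+d. ennreal (U d) * k (snd (snd d)) \<partial>P)"
      by (simp add: GU_def k_def e1 e2)
    also have "\<dots> = (\<integral>\<^sup>+d. ennreal (V d) * k (snd (snd d)) \<partial>P)"
      by (rule ce[OF km])
    also have "\<dots> = (\<integral>\<^sup>+d. GV (a, g(i:=d)) \<partial>P)"
      by (simp add: GV_def k_def e1 e2)
    finally show "(\<integral>\<^sup>+d. GU (a, g(i:=d)) \<partial>P) = (\<integral>\<^sup>+d. GV (a, g(i:=d)) \<partial>P)" .
  qed
  also have "\<dots> = (\<integral>\<^sup>+\<omega>. GV (aux n \<omega>, D n \<omega>) \<partial>M)"
    by (rule prod_formula[OF i GV_m, symmetric])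
  also have "\<dots> = (\<integral>\<^sup>+\<omega>. ennreal (V (dd n i \<omega>)) * h (aux n \<omega>, Zv n \<omega>) \<partial>M)"
    by (simp add: GV_def Zv_D Ui)
  finally show ?thesis .
qed

definition Vf :: "nat \<Rightarrow> real \<times> real \<times> 'z \<Rightarrow> real" where
  "Vf k p = eps p * xi p * w k (snd (snd p))"

definition cc :: "nat \<Rightarrow> real" where "cc k = (\<integral>p. Vf k p \<partial>P)"

lemma Vf_meas[measurable]: "Vf k \<in> borel_measurable (borel \<Otimes>\<^sub>M borel \<Otimes>\<^sub>M borel)"
  unfolding Vf_def by measurable

lemma Vf_meas'[measurable]: "Vf k \<in> borel_measurable borel"
  by (subst borel3) (rule Vf_meas)

lemma Vf_measP[measurable]: "Vf k \<in> borel_measurable P"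
  unfolding P_meas_cong by (rule Vf_meas)

lemma int_exi2: "integrable P (\<lambda>p. (eps p)\<^sup>2 * (xi p)\<^sup>2)"
proof (rule integrableI_nonneg)
  show "(\<lambda>p. (eps p)\<^sup>2 * (xi p)\<^sup>2) \<in> borel_measurable P" unfolding P_meas_cong by measurable
  show "AE p in P. 0 \<le> (eps p)\<^sup>2 * (xi p)\<^sup>2" by simp
  show "(\<integral>\<^sup>+p. ennreal ((eps p)\<^sup>2 * (xi p)\<^sup>2) \<partial>P) < \<infinity>"
    using fin_mom by (simp add: split_beta')
qed

lemma int_Vf2: "k \<in> {1..K} \<Longrightarrow> integrable P (\<lambda>p. (Vf k p)\<^sup>2)"
proof (rule Bochner_Integration.integrable_bound[OF integrable_mult_right[OF int_exi2, of "C\<^sup>2"]])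
  assume k: "k \<in> {1..K}"
  show "(\<lambda>p. (Vf k p)\<^sup>2) \<in> borel_measurable P" by measurable
  show "AE p in P. norm ((Vf k p)\<^sup>2) \<le> norm (C\<^sup>2 * ((eps p)\<^sup>2 * (xi p)\<^sup>2))"
  proof (rule AE_I2)
    fix p :: "real \<times> real \<times> 'z"
    have "\<bar>w k (snd (snd p))\<bar> \<le> C" using w_bdd[OF k] .
    then have "(w k (snd (snd p)))\<^sup>2 \<le> C\<^sup>2" by (metis abs_le_square_iff abs_of_pos C)
    moreover have "(Vf k p)\<^sup>2 = (w k (snd (snd p)))\<^sup>2 * ((eps p)\<^sup>2 * (xi p)\<^sup>2)"
      unfolding Vf_def power_mult_distrib by (simp only: mult_ac)
    ultimately have "(Vf k p)\<^sup>2 \<le> C\<^sup>2 * ((eps p)\<^sup>2 * (xi p)\<^sup>2)"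
      by (metis mult_right_mono zero_le_mult_iff zero_le_power2)
    then show "norm ((Vf k p)\<^sup>2) \<le> norm (C\<^sup>2 * ((eps p)\<^sup>2 * (xi p)\<^sup>2))" by simp
  qed
qed

lemma int_Vf: "k \<in> {1..K} \<Longrightarrow> integrable P (Vf k)"
  using PP.square_integrable_imp_integrable[OF _ int_Vf2] by simp

lemma indep_pair:
  assumes ij: "i < n" "j < n" "i \<noteq> j" and g[measurable]: "g \<in> borel_measurable (borel :: (real \<times> real \<times> 'z) measure)"
  shows "M.indep_var borel (\<lambda>\<omega>. (g (dd n i \<omega>)::real)) borel (\<lambda>\<omega>. g (dd n j \<omega>))"
proof -
  have iv: "M.indep_var (PiM {i} (\<lambda>_. borel)) (\<lambda>\<omega>. restrict (\<lambda>i. dd n i \<omega>) {i}) (PiM {j} (\<lambda>_. borel)) (\<lambda>\<omega>. restrict (\<lambda>i. dd n i \<omega>) {j})"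
    by (rule M.indep_var_restrict[OF dd_indep]) (use ij in auto)
  have m1: "(\<lambda>f. g (f i)) \<in> borel_measurable (PiM {i} (\<lambda>_. borel))" by measurable
  have m2: "(\<lambda>f. g (f j)) \<in> borel_measurable (PiM {j} (\<lambda>_. borel))" by measurable
  from M.indep_var_compose[OF iv m1 m2] show ?thesis by (simp add: o_def)
qed

lemma dd_integral: "i < n \<Longrightarrow> g \<in> borel_measurable borel \<Longrightarrow> (\<integral>\<omega>. g (dd n i \<omega>) \<partial>M) = (\<integral>p. (g p :: real) \<partial>P)"
  by (subst integral_distr[symmetric]) (auto simp: dd_law)

lemma dd_integrable: "i < n \<Longrightarrow> g \<in> borel_measurable borel \<Longrightarrow> integrable M (\<lambda>\<omega>. g (dd n i \<omega>)) \<longleftrightarrow> integrable P (g :: _ \<Rightarrow> real)"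
  by (subst integrable_distr_eq[symmetric]) (auto simp: dd_law)

lemma dd_nn_integral: "i < n \<Longrightarrow> g \<in> borel_measurable borel \<Longrightarrow> (\<integral>\<^sup>+\<omega>. g (dd n i \<omega>) \<partial>M) = (\<integral>\<^sup>+p. g p \<partial>P)"
  by (subst nn_integral_distr[symmetric]) (auto simp: dd_law)

definition tau where "tau k = (\<integral>p. (Vf k p - cc k)\<^sup>2 \<partial>P)"

lemma second_moment:
  assumes k: "k \<in> {1..K}"
  shows "integrable M (\<lambda>\<omega>. (\<Sum>i<n. Vf k (dd n i \<omega>) - cc k)\<^sup>2)"
    and "(\<integral>\<omega>. (\<Sum>i<n. Vf k (dd n i \<omega>) - cc k)\<^sup>2 \<partial>M) = real n * tau k"
proof -
  define U where "U i \<omega> = Vf k (dd n i \<omega>) - cc k" for i \<omega>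
  have gm: "(\<lambda>p. Vf k p - cc k) \<in> borel_measurable borel" by measurable
  have gm2: "(\<lambda>p. (Vf k p - cc k)\<^sup>2) \<in> borel_measurable borel" by measurable
  have iP: "integrable P (\<lambda>p. Vf k p - cc k)" using int_Vf[OF k] by simp
  have iP2: "integrable P (\<lambda>p. (Vf k p - cc k)\<^sup>2)"
  proof -
    have "integrable P (\<lambda>p. (Vf k p)\<^sup>2 - 2 * cc k * Vf k p + (cc k)\<^sup>2)"
      using int_Vf2[OF k] int_Vf[OF k] by auto
    moreover have "(\<lambda>p. (Vf k p)\<^sup>2 - 2 * cc k * Vf k p + (cc k)\<^sup>2) = (\<lambda>p. (Vf k p - cc k)\<^sup>2)"
      by (auto simp: fun_eq_iff power2_diff)
    ultimately show ?thesis by simp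
  qed
  have EU: "i < n \<Longrightarrow> (\<integral>\<omega>. U i \<omega> \<partial>M) = 0" for i
    unfolding U_def using dd_integral[OF _ gm, of i n] iP int_Vf[OF k] by (simp add: cc_def PP.prob_space)
  have EU2: "i < n \<Longrightarrow> (\<integral>\<omega>. U i \<omega> * U i \<omega> \<partial>M) = tau k" for i
    unfolding U_def tau_def using dd_integral[OF _ gm2, of i n] by (simp add: power2_eq_square)
  have iU: "i < n \<Longrightarrow> integrable M (U i)" for i
    unfolding U_def using dd_integrable[OF _ gm, of i n] iP by simp
  have iU2: "i < n \<Longrightarrow> integrable M (\<lambda>\<omega>. U i \<omega> * U i \<omega>)" for i
    unfolding U_def using dd_integrable[OF _ gm2, of i n] iP2 by (simp add: power2_eq_square)
  have ind: "i < n \<Longrightarrow> j < n \<Longrightarrow> i \<noteq> j \<Longrightarrow> M.indep_var borel (U i) borel (U j)" for i j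
    unfolding U_def using indep_pair[OF _ _ _ gm] by simp
  have iUU: "i < n \<Longrightarrow> j < n \<Longrightarrow> integrable M (\<lambda>\<omega>. U i \<omega> * U j \<omega>)" for i j
    using iU2 M.indep_var_integrable[OF ind iU iU] by (cases "i = j") auto
  have EUU: "i < n \<Longrightarrow> j < n \<Longrightarrow> (\<integral>\<omega>. U i \<omega> * U j \<omega> \<partial>M) = (if i = j then tau k else 0)" for i j
    using EU2 M.indep_var_lebesgue_integral[OF ind iU iU] EU by (cases "i = j") auto
  have sq: "(\<Sum>i<n. Vf k (dd n i \<omega>) - cc k)\<^sup>2 = (\<Sum>i<n. \<Sum>j<n. U i \<omega> * U j \<omega>)" for \<omega>
    unfolding U_def power2_eq_square by (simp add: sum_product)
  show "integrable M (\<lambda>\<omega>. (\<Sum>i<n. Vf k (dd n i \<omega>) - cc k)\<^sup>2)"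
    unfolding sq by (intro Bochner_Integration.integrable_sum iUU) auto
  have "(\<integral>\<omega>. (\<Sum>i<n. Vf k (dd n i \<omega>) - cc k)\<^sup>2 \<partial>M) = (\<Sum>i<n. \<Sum>j<n. \<integral>\<omega>. U i \<omega> * U j \<omega> \<partial>M)"
    unfolding sq
    apply (subst Bochner_Integration.integral_sum)
     apply (intro Bochner_Integration.integrable_sum iUU; simp)
    apply (intro sum.cong refl)
    apply (subst Bochner_Integration.integral_sum)
     apply (intro iUU; simp)
    apply simp
    done
  also have "\<dots> = (\<Sum>i<n. \<Sum>j<n. if i = j then tau k else 0)"
    by (intro sum.cong refl) (simp add: EUU)
  also have "\<dots> = real n * tau k" by simp
  finally show "(\<integral>\<omega>. (\<Sum>i<n. Vf k (dd n i \<omega>) - cc k)\<^sup>2 \<partial>M) = real n * tau k" .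
qed

lemma mean_conv:
  assumes k: "k \<in> {1..K}" and d: "0 < \<delta>"
  shows "(\<lambda>n. M.prob {\<omega>\<in>space M. \<delta> \<le> \<bar>(\<Sum>i<n. Vf k (dd n i \<omega>)) / real n - cc k\<bar>}) \<longlonglongrightarrow> 0"
proof (rule tendsto_sandwich[of "\<lambda>_. 0" _ _ "\<lambda>n. (tau k / \<delta>\<^sup>2) * (1 / real n)"])
  show "\<forall>\<^sub>F n in sequentially. 0 \<le> M.prob {\<omega>\<in>space M. \<delta> \<le> \<bar>(\<Sum>i<n. Vf k (dd n i \<omega>)) / real n - cc k\<bar>}"
    by simp
  show "(\<lambda>_. 0) \<longlonglongrightarrow> (0::real)" by simp
  show "(\<lambda>n. (tau k / \<delta>\<^sup>2) * (1 / real n)) \<longlonglongrightarrow> 0"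
    using tendsto_mult_left[OF lim_1_over_n, of "tau k / \<delta>\<^sup>2"] by simp
  show "\<forall>\<^sub>F n in sequentially. M.prob {\<omega>\<in>space M. \<delta> \<le> \<bar>(\<Sum>i<n. Vf k (dd n i \<omega>)) / real n - cc k\<bar>} \<le> (tau k / \<delta>\<^sup>2) * (1 / real n)"
  proof (rule eventually_sequentiallyI[of 1])
    fix n :: nat assume n: "1 \<le> n"
    define S where "S \<omega> = (\<Sum>i<n. Vf k (dd n i \<omega>) - cc k)" for \<omega>
    have eq: "(\<Sum>i<n. Vf k (dd n i \<omega>)) / real n - cc k = S \<omega> / real n" for \<omega>
      using n by (simp add: S_def sum_subtractf field_simps)
    have set_eq: "{\<omega>\<in>space M. \<delta> \<le> \<bar>(\<Sum>i<n. Vf k (dd n i \<omega>)) / real n - cc k\<bar>} = {\<omega>\<in>space M. (S \<omega>)\<^sup>2 \<ge> (real n * \<delta>)\<^sup>2}"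
    proof -
      have "\<delta> \<le> \<bar>S \<omega> / real n\<bar> \<longleftrightarrow> (real n * \<delta>)\<^sup>2 \<le> (S \<omega>)\<^sup>2" for \<omega>
      proof -
        have "\<delta> \<le> \<bar>S \<omega> / real n\<bar> \<longleftrightarrow> real n * \<delta> \<le> \<bar>S \<omega>\<bar>"
          using n by (simp add: field_simps abs_divide)
        also have "\<dots> \<longleftrightarrow> (real n * \<delta>)\<^sup>2 \<le> (S \<omega>)\<^sup>2"
          using d by (metis abs_le_square_iff abs_of_nonneg mult_nonneg_nonneg of_nat_0_le_iff less_imp_le)
        finally show ?thesis .
      qed
      then show ?thesis using eq by auto
    qed
    have int: "integrable M (\<lambda>\<omega>. (S \<omega>)\<^sup>2)" unfolding S_def by (rule second_moment(1)[OF k])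
    have "M.prob {\<omega>\<in>space M. (S \<omega>)\<^sup>2 \<ge> (real n * \<delta>)\<^sup>2} \<le> (\<integral>\<omega>. (S \<omega>)\<^sup>2 \<partial>M) / (real n * \<delta>)\<^sup>2"
      by (rule integral_Markov_inequality_measure[OF int, of "space M"]) (use n d in auto)
    also have "\<dots> = real n * tau k / (real n * \<delta>)\<^sup>2" unfolding S_def by (simp add: second_moment(2)[OF k])
    also have "\<dots> = (tau k / \<delta>\<^sup>2) * (1 / real n)" using n by (simp add: field_simps power2_eq_square)
    finally show "M.prob {\<omega>\<in>space M. \<delta> \<le> \<bar>(\<Sum>i<n. Vf k (dd n i \<omega>)) / real n - cc k\<bar>} \<le> (tau k / \<delta>\<^sup>2) * (1 / real n)"
      unfolding set_eq .
  qed
qed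

lemma sum_Zv: "(\<Sum>j<n. F (Zv n \<omega> j)) = (\<Sum>j<n. F (Z n j \<omega>))"
  by (rule sum.cong) (auto simp: Zv_def)

lemma EB_generic:
  fixes U :: "real \<times> real \<times> 'z \<Rightarrow> real" and V' :: "'z \<Rightarrow> real" and e :: "'b \<Rightarrow> 'z \<Rightarrow> real"
  assumes U[measurable]: "U \<in> borel_measurable (borel \<Otimes>\<^sub>M borel \<Otimes>\<^sub>M borel)" and Unn: "\<And>p. 0 \<le> U p"
    and V'[measurable]: "V' \<in> borel_measurable borel" and Vnn: "\<And>zz. 0 \<le> V' zz"
    and ce: "\<And>k. k \<in> borel_measurable borel \<Longrightarrow>
       (\<integral>\<^sup>+p. ennreal (U p) * k (snd (snd p)) \<partial>P) = (\<integral>\<^sup>+p. ennreal (V' (snd (snd p))) * k (snd (snd p)) \<partial>P)"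
    and e[measurable]: "case_prod e \<in> borel_measurable (N n \<Otimes>\<^sub>M borel)"
    and eta: "0 < \<eta>"
  shows "(\<integral>\<^sup>+\<omega>. ennreal ((\<Sum>i<n. U (dd n i \<omega>) * (e (aux n \<omega>) (Z n i \<omega>))\<^sup>2) / real n) *
      (if (\<Sum>i<n. V' (Z n i \<omega>) * (e (aux n \<omega>) (Z n i \<omega>))\<^sup>2) / real n \<le> \<eta> then 1 else 0) \<partial>M) \<le> ennreal \<eta>"
proof -
  define I where "I \<omega> = (if (\<Sum>i<n. V' (Z n i \<omega>) * (e (aux n \<omega>) (Z n i \<omega>))\<^sup>2) / real n \<le> \<eta> then 1 else 0 :: ennreal)" for \<omega>
  have I_m[measurable]: "I \<in> borel_measurable M" unfolding I_def by measurable
  define h where "h i = (\<lambda>(a, zs). ennreal ((e a (zs i))\<^sup>2) *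
      (if (\<Sum>j<n. V' (zs j) * (e a (zs j))\<^sup>2) / real n \<le> \<eta> then 1 else 0 :: ennreal))" for i
  have h_m: "i < n \<Longrightarrow> h i \<in> borel_measurable (N n \<Otimes>\<^sub>M PiM {..<n} (\<lambda>_. borel))" for i
    unfolding h_def by measurable
  have h_eq: "i < n \<Longrightarrow> h i (aux n \<omega>, Zv n \<omega>) = ennreal ((e (aux n \<omega>) (Z n i \<omega>))\<^sup>2) * I \<omega>" for i \<omega>
    unfolding h_def I_def by (simp add: sum_Zv[where F="\<lambda>zz. V' zz * (e (aux n \<omega>) zz)\<^sup>2"]) (simp add: Zv_def)
  have V_m: "(\<lambda>p. V' (snd (snd p))) \<in> borel_measurable (borel \<Otimes>\<^sub>M borel \<Otimes>\<^sub>M borel)" by measurable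
  have step: "i < n \<Longrightarrow> (\<integral>\<^sup>+\<omega>. ennreal (U (dd n i \<omega>)) * (ennreal ((e (aux n \<omega>) (Z n i \<omega>))\<^sup>2) * I \<omega>) \<partial>M)
     = (\<integral>\<^sup>+\<omega>. ennreal (V' (Z n i \<omega>)) * (ennreal ((e (aux n \<omega>) (Z n i \<omega>))\<^sup>2) * I \<omega>) \<partial>M)" for i
    using ce_omega[OF _ h_m U V_m ce, of i] by (simp add: h_eq dd_def)
  have "(\<integral>\<^sup>+\<omega>. ennreal ((\<Sum>i<n. U (dd n i \<omega>) * (e (aux n \<omega>) (Z n i \<omega>))\<^sup>2) / real n) * I \<omega> \<partial>M)
     = (\<integral>\<^sup>+\<omega>. ennreal (1 / real n) * (\<Sum>i<n. ennreal (U (dd n i \<omega>)) * (ennreal ((e (aux n \<omega>) (Z n i \<omega>))\<^sup>2) * I \<omega>)) \<partial>M)"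
    by (rule nn_integral_cong, rule ennreal_avg) (auto simp: Unn)
  also have "\<dots> = ennreal (1 / real n) * (\<Sum>i<n. \<integral>\<^sup>+\<omega>. ennreal (U (dd n i \<omega>)) * (ennreal ((e (aux n \<omega>) (Z n i \<omega>))\<^sup>2) * I \<omega>) \<partial>M)"
    apply (subst nn_integral_cmult)
     apply measurable
    apply (subst nn_integral_sum)
     apply measurable
    done
  also have "\<dots> = ennreal (1 / real n) * (\<Sum>i<n. \<integral>\<^sup>+\<omega>. ennreal (V' (Z n i \<omega>)) * (ennreal ((e (aux n \<omega>) (Z n i \<omega>))\<^sup>2) * I \<omega>) \<partial>M)"
    by (simp add: step)
  also have "\<dots> = (\<integral>\<^sup>+\<omega>. ennreal (1 / real n) * (\<Sum>i<n. ennreal (V' (Z n i \<omega>)) * (ennreal ((e (aux n \<omega>) (Z n i \<omega>))\<^sup>2) * I \<omega>)) \<partial>M)"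
    apply (subst nn_integral_cmult)
     apply measurable
    apply (subst nn_integral_sum)
     apply measurable
    done
  also have "\<dots> = (\<integral>\<^sup>+\<omega>. ennreal ((\<Sum>i<n. V' (Z n i \<omega>) * (e (aux n \<omega>) (Z n i \<omega>))\<^sup>2) / real n) * I \<omega> \<partial>M)"
    by (rule nn_integral_cong, rule ennreal_avg[symmetric]) (auto simp: Vnn)
  also have "\<dots> \<le> (\<integral>\<^sup>+\<omega>. ennreal \<eta> \<partial>M)"
    by (rule nn_integral_mono) (auto simp: I_def intro: ennreal_leI)
  also have "\<dots> = ennreal \<eta>" by (simp add: M.emeasure_space_1)
  finally show ?thesis unfolding I_def .
qed

lemma EB_conv_generic:
  fixes U :: "real \<times> real \<times> 'z \<Rightarrow> real" and V' :: "'z \<Rightarrow> real" and e :: "nat \<Rightarrow> 'b \<Rightarrow> 'z \<Rightarrow> real"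
  assumes U[measurable]: "U \<in> borel_measurable (borel \<Otimes>\<^sub>M borel \<Otimes>\<^sub>M borel)" and Unn: "\<And>p. 0 \<le> U p"
    and V'[measurable]: "V' \<in> borel_measurable borel" and Vnn: "\<And>zz. 0 \<le> V' zz"
    and ce: "\<And>k. k \<in> borel_measurable borel \<Longrightarrow>
       (\<integral>\<^sup>+p. ennreal (U p) * k (snd (snd p)) \<partial>P) = (\<integral>\<^sup>+p. ennreal (V' (snd (snd p))) * k (snd (snd p)) \<partial>P)"
    and e[measurable]: "\<And>n. case_prod (e n) \<in> borel_measurable (N n \<Otimes>\<^sub>M borel)"
    and small: "small_oP M (\<lambda>n \<omega>. (\<Sum>i<n. (e n (aux n \<omega>) (z n i \<omega>))\<^sup>2 * V' (z n i \<omega>)) / real n) (\<lambda>n. 1)"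
    and t: "0 < t"
  shows "(\<lambda>n. M.prob {\<omega>\<in>space M. t \<le> (\<Sum>i<n. U (dd n i \<omega>) * (e n (aux n \<omega>) (Z n i \<omega>))\<^sup>2) / real n}) \<longlonglongrightarrow> 0"
proof (rule tendsto0_by_eps)
  fix r :: real assume r: "0 < r"
  define \<eta> where "\<eta> = r * t / 2"
  have eta: "0 < \<eta>" using r t by (simp add: \<eta>_def)
  define Bg where "Bg n \<omega> = (\<Sum>i<n. V' (Z n i \<omega>) * (e n (aux n \<omega>) (Z n i \<omega>))\<^sup>2) / real n" for n \<omega>
  define EB where "EB n \<omega> = (\<Sum>i<n. U (dd n i \<omega>) * (e n (aux n \<omega>) (Z n i \<omega>))\<^sup>2) / real n" for n \<omega>
  have Bg_m[measurable]: "Bg n \<in> borel_measurable M" for n unfolding Bg_def by measurable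
  have EB_m[measurable]: "EB n \<in> borel_measurable M" for n unfolding EB_def by measurable
  have Bg_nn: "0 \<le> Bg n \<omega>" for n \<omega> unfolding Bg_def by (auto intro!: sum_nonneg divide_nonneg_nonneg mult_nonneg_nonneg Vnn)
  have "(\<lambda>n. M.prob {\<omega>\<in>space M. \<bar>(\<Sum>i<n. (e n (aux n \<omega>) (z n i \<omega>))\<^sup>2 * V' (z n i \<omega>)) / real n / 1\<bar> > \<eta>}) \<longlonglongrightarrow> 0"
    using small eta unfolding small_oP_def by auto
  moreover have "{\<omega>\<in>space M. \<bar>(\<Sum>i<n. (e n (aux n \<omega>) (z n i \<omega>))\<^sup>2 * V' (z n i \<omega>)) / real n / 1\<bar> > \<eta>} = {\<omega>\<in>space M. Bg n \<omega> > \<eta>}" for n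
  proof -
    have "(\<Sum>i<n. (e n (aux n \<omega>) (z n i \<omega>))\<^sup>2 * V' (z n i \<omega>)) / real n / 1 = Bg n \<omega>" for \<omega>
    proof -
      have "(\<Sum>i<n. (e n (aux n \<omega>) (z n i \<omega>))\<^sup>2 * V' (z n i \<omega>)) = (\<Sum>i<n. V' (Z n i \<omega>) * (e n (aux n \<omega>) (Z n i \<omega>))\<^sup>2)"
        by (rule sum.cong) (auto simp: Z_def mult.commute)
      then show ?thesis unfolding Bg_def by simp
    qed
    then show ?thesis using Bg_nn by auto
  qed
  ultimately have lim: "(\<lambda>n. M.prob {\<omega>\<in>space M. Bg n \<omega> > \<eta>}) \<longlonglongrightarrow> 0" by simp
  have ev: "eventually (\<lambda>n. M.prob {\<omega>\<in>space M. Bg n \<omega> > \<eta>} < r / 2) sequentially"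
    using order_tendstoD(2)[OF lim, of "r / 2"] r by simp
  show "eventually (\<lambda>n. M.prob {\<omega>\<in>space M. t \<le> EB n \<omega>} \<le> r) sequentially"
    unfolding EB_def[symmetric]
  proof (rule eventually_mono[OF ev])
    fix n assume n: "M.prob {\<omega>\<in>space M. Bg n \<omega> > \<eta>} < r / 2"
    have "M.prob {\<omega>\<in>space M. t \<le> EB n \<omega>} \<le> M.prob {\<omega>\<in>space M. t \<le> EB n \<omega> \<and> Bg n \<omega> \<le> \<eta>} + M.prob {\<omega>\<in>space M. Bg n \<omega> > \<eta>}"
      by (rule M.prob_le_union) auto
    also have "M.prob {\<omega>\<in>space M. t \<le> EB n \<omega> \<and> Bg n \<omega> \<le> \<eta>} \<le> \<eta> / t"
    proof (rule M.markov_nn[where I="\<lambda>\<omega>. ennreal (EB n \<omega>) * (if Bg n \<omega> \<le> \<eta> then 1 else 0)"])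
      show "(\<integral>\<^sup>+\<omega>. ennreal (EB n \<omega>) * (if Bg n \<omega> \<le> \<eta> then 1 else 0) \<partial>M) \<le> ennreal \<eta>"
        unfolding EB_def Bg_def by (rule EB_generic[OF U Unn V' Vnn ce e eta])
    qed (use t eta in \<open>auto intro: ennreal_leI\<close>)
    finally show "M.prob {\<omega>\<in>space M. t \<le> EB n \<omega>} \<le> r"
      using n t by (simp add: \<eta>_def)
  qed
qed simp

lemma uP_nn: "0 \<le> uP zz" using uP by (simp add: is_cond_exp_fun_nonneg_def)
lemma vP_nn: "0 \<le> vP zz" using vP by (simp add: is_cond_exp_fun_nonneg_def)

lemma EBg_conv: "0 < t \<Longrightarrow> (\<lambda>n. M.prob {\<omega>\<in>space M. t \<le> (\<Sum>i<n. (eps (dd n i \<omega>))\<^sup>2 * (gP (Z n i \<omega>) - ghat n (aux n \<omega>) (Z n i \<omega>))\<^sup>2) / real n}) \<longlonglongrightarrow> 0"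
  by (rule EB_conv_generic[where U="\<lambda>p. (eps p)\<^sup>2" and V'=uP and e="\<lambda>n a zz. gP zz - ghat n a zz"])
     (auto simp: uP_nn ce_u Bg)

lemma EBf_conv: "0 < t \<Longrightarrow> (\<lambda>n. M.prob {\<omega>\<in>space M. t \<le> (\<Sum>i<n. (xi (dd n i \<omega>))\<^sup>2 * (fP (Z n i \<omega>) - fhat n (aux n \<omega>) (Z n i \<omega>))\<^sup>2) / real n}) \<longlonglongrightarrow> 0"
  by (rule EB_conv_generic[where U="\<lambda>p. (xi p)\<^sup>2" and V'=vP and e="\<lambda>n a zz. fP zz - fhat n a zz"])
     (auto simp: vP_nn ce_v Bf)

definition AA where "AA n \<omega> = ((\<Sum>i<n. (fP (Z n i \<omega>) - fhat n (aux n \<omega>) (Z n i \<omega>))\<^sup>2) / real n) *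
               ((\<Sum>i<n. (gP (Z n i \<omega>) - ghat n (aux n \<omega>) (Z n i \<omega>))\<^sup>2) / real n)"

lemma AA_meas[measurable]: "AA n \<in> borel_measurable M" unfolding AA_def by measurable

lemma AA_conv: "(\<lambda>n. M.prob {\<omega>\<in>space M. 1 \<le> real n * AA n \<omega>}) \<longlonglongrightarrow> 0"
proof (rule tendsto_sandwich[of "\<lambda>_. 0" _ _ "\<lambda>n. M.prob {\<omega>\<in>space M. \<bar>AA n \<omega> / (1 / real n)\<bar> > 1/2}"])
  have eqA: "AA n \<omega> = ((\<Sum>i<n. (fP (z n i \<omega>) - fhat n (aux n \<omega>) (z n i \<omega>))\<^sup>2) / real n) *
               ((\<Sum>i<n. (gP (z n i \<omega>) - ghat n (aux n \<omega>) (z n i \<omega>))\<^sup>2) / real n)" for n \<omega>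
  proof -
    have "(\<Sum>i<n. (fP (Z n i \<omega>) - fhat n (aux n \<omega>) (Z n i \<omega>))\<^sup>2) = (\<Sum>i<n. (fP (z n i \<omega>) - fhat n (aux n \<omega>) (z n i \<omega>))\<^sup>2)"
      by (rule sum.cong) (auto simp: Z_def)
    moreover have "(\<Sum>i<n. (gP (Z n i \<omega>) - ghat n (aux n \<omega>) (Z n i \<omega>))\<^sup>2) = (\<Sum>i<n. (gP (z n i \<omega>) - ghat n (aux n \<omega>) (z n i \<omega>))\<^sup>2)"
      by (rule sum.cong) (auto simp: Z_def)
    ultimately show ?thesis unfolding AA_def by simp
  qed
  show "(\<lambda>n. M.prob {\<omega>\<in>space M. \<bar>AA n \<omega> / (1 / real n)\<bar> > 1/2}) \<longlonglongrightarrow> 0"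
  proof -
    have h: "\<forall>\<delta>>0. (\<lambda>n. M.prob {\<omega>\<in>space M. \<bar>AA n \<omega> / (1 / real n)\<bar> > \<delta>}) \<longlonglongrightarrow> 0"
      using AfAg unfolding small_oP_def eqA[symmetric] by blast
    show ?thesis by (rule h[rule_format]) simp
  qed
  show "\<forall>\<^sub>F n in sequentially. 0 \<le> M.prob {\<omega>\<in>space M. 1 \<le> real n * AA n \<omega>}" by simp
  show "\<forall>\<^sub>F n in sequentially. M.prob {\<omega>\<in>space M. 1 \<le> real n * AA n \<omega>} \<le> M.prob {\<omega>\<in>space M. \<bar>AA n \<omega> / (1 / real n)\<bar> > 1/2}"
    by (intro always_eventually allI M.finite_measure_mono) (auto simp: mult.commute)
qed simp

lemma exi_markov:
  assumes t: "0 < t"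
  shows "M.prob {\<omega>\<in>space M. t \<le> (\<Sum>i<n. (eps (dd n i \<omega>))\<^sup>2 * (xi (dd n i \<omega>))\<^sup>2) / real n}
     \<le> (\<integral>p. (eps p)\<^sup>2 * (xi p)\<^sup>2 \<partial>P) / t"
proof (cases "n = 0")
  case True then show ?thesis using t by (simp add: integral_nonneg_AE)
next
  case False
  have gm: "(\<lambda>p::real \<times> real \<times> 'z. (eps p)\<^sup>2 * (xi p)\<^sup>2) \<in> borel_measurable borel" by (subst borel3) measurable
  have ii: "i < n \<Longrightarrow> integrable M (\<lambda>\<omega>. (eps (dd n i \<omega>))\<^sup>2 * (xi (dd n i \<omega>))\<^sup>2)" for i
    using dd_integrable[OF _ gm, of i n] int_exi2 by simp
  have int: "integrable M (\<lambda>\<omega>. (\<Sum>i<n. (eps (dd n i \<omega>))\<^sup>2 * (xi (dd n i \<omega>))\<^sup>2) / real n)"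
    by (intro integrable_divide Bochner_Integration.integrable_sum ii) auto
  have "M.prob {\<omega>\<in>space M. t \<le> (\<Sum>i<n. (eps (dd n i \<omega>))\<^sup>2 * (xi (dd n i \<omega>))\<^sup>2) / real n}
     \<le> (\<integral>\<omega>. (\<Sum>i<n. (eps (dd n i \<omega>))\<^sup>2 * (xi (dd n i \<omega>))\<^sup>2) / real n \<partial>M) / t"
    by (rule integral_Markov_inequality_measure[OF int, of "space M"]) (use t in \<open>auto intro!: AE_I2 sum_nonneg divide_nonneg_nonneg\<close>)
  also have "(\<integral>\<omega>. (\<Sum>i<n. (eps (dd n i \<omega>))\<^sup>2 * (xi (dd n i \<omega>))\<^sup>2) / real n \<partial>M) = (\<integral>p. (eps p)\<^sup>2 * (xi p)\<^sup>2 \<partial>P)"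
    using False ii by (simp add: Bochner_Integration.integral_sum dd_integral[OF _ gm])
  finally show ?thesis .
qed

definition Rf where "Rf n k a p = (fst p - fhat n a (snd (snd p))) * (fst (snd p) - ghat n a (snd (snd p))) * w k (snd (snd p))"

lemma Rf_meas[measurable]: "(\<lambda>(a, p). Rf n k a p) \<in> borel_measurable (N n \<Otimes>\<^sub>M (borel \<Otimes>\<^sub>M borel \<Otimes>\<^sub>M borel))"
  unfolding Rf_def by measurable

lemma R_null:
  assumes n: "2 \<le> n"
  shows "M.prob {\<omega>\<in>space M. Rf n k (aux n \<omega>) (dd n 0 \<omega>) = Rf n k (aux n \<omega>) (dd n 1 \<omega>) \<and> Rf n k (aux n \<omega>) (dd n 1 \<omega>) \<noteq> 0} = 0"
proof -
  define G where "G = (\<lambda>(a, f::nat \<Rightarrow> real \<times> real \<times> 'z). if Rf n k a (f 0) = Rf n k a (f 1) \<and> Rf n k a (f 1) \<noteq> 0 then 1 else (0::ennreal))"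
  have n0: "0 < n" "(0::nat) \<in> {..<n}" "(1::nat) \<in> {..<n}" using n by auto
  have Gm: "G \<in> borel_measurable (N n \<Otimes>\<^sub>M PiM {..<n} (\<lambda>_. borel))"
  proof -
    have m0: "(\<lambda>(a, f). Rf n k a (f (0::nat))) \<in> borel_measurable (N n \<Otimes>\<^sub>M PiM {..<n} (\<lambda>_. borel))"
      using n0 by (subst borel3) measurable
    have m1: "(\<lambda>(a, f). Rf n k a (f (1::nat))) \<in> borel_measurable (N n \<Otimes>\<^sub>M PiM {..<n} (\<lambda>_. borel))"
      using n0 by (subst borel3) measurable
    show ?thesis unfolding G_def using m0 m1 by (simp add: split_beta') measurable
  qed
  define E where "E = {\<omega>\<in>space M. Rf n k (aux n \<omega>) (dd n 0 \<omega>) = Rf n k (aux n \<omega>) (dd n 1 \<omega>) \<and> Rf n k (aux n \<omega>) (dd n 1 \<omega>) \<noteq> 0}"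
  have "emeasure M E = (\<integral>\<^sup>+\<omega>. G (aux n \<omega>, D n \<omega>) \<partial>M)"
  proof -
    have "emeasure M E = (\<integral>\<^sup>+\<omega>. indicator E \<omega> \<partial>M)"
      by (rule nn_integral_indicator[symmetric]) (simp add: E_def)
    also have "\<dots> = (\<integral>\<^sup>+\<omega>. G (aux n \<omega>, D n \<omega>) \<partial>M)"
      using n0 by (intro nn_integral_cong) (auto simp: G_def E_def D_def indicator_def)
    finally show ?thesis .
  qed
  also have "\<dots> = (\<integral>\<^sup>+a. \<integral>\<^sup>+g. \<integral>\<^sup>+d. G (a, g(0:=d)) \<partial>P \<partial>PiM ({..<n}-{0}) (\<lambda>_. P) \<partial>distr M (N n) (aux n))"
    by (rule prod_formula[OF n0(1) Gm])
  also have "\<dots> = (\<integral>\<^sup>+a. \<integral>\<^sup>+g. 0 \<partial>PiM ({..<n}-{0}) (\<lambda>_. P) \<partial>distr M (N n) (aux n))"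
  proof (rule nn_integral_cong, rule nn_integral_cong)
    fix a and g :: "nat \<Rightarrow> real \<times> real \<times> 'z" assume a: "a \<in> space (distr M (N n) (aux n))"
    define r where "r = Rf n k a (g 1)"
    have "(\<integral>\<^sup>+d. G (a, g(0:=d)) \<partial>P) = (\<integral>\<^sup>+d. indicator {p \<in> space P. Rf n k a p = r \<and> r \<noteq> 0} d \<partial>P)"
      by (intro nn_integral_cong) (auto simp: G_def r_def indicator_def)
    also have "\<dots> = 0"
    proof (cases "r = 0")
      case True then show ?thesis by simp
    next
      case False
      have a': "a \<in> space (N n)" using a by simp
      have Fm: "fhat n a \<in> borel_measurable borel" by (rule measurable_Pair2[OF fhat_meas a', simplified])
      have Gm': "ghat n a \<in> borel_measurable borel" by (rule measurable_Pair2[OF ghat_meas a', simplified])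
      have nl: "{p :: real \<times> real \<times> 'z. (fst p - fhat n a (snd (snd p))) * (fst (snd p) - ghat n a (snd (snd p))) * w k (snd (snd p)) = r} \<in> null_sets lborel"
        by (rule hyper_null[OF Fm Gm' w_meas False])
      then have "{p :: real \<times> real \<times> 'z. (fst p - fhat n a (snd (snd p))) * (fst (snd p) - ghat n a (snd (snd p))) * w k (snd (snd p)) = r} \<in> null_sets P"
        using P_ac unfolding absolutely_continuous_def by auto
      moreover have "{p \<in> space P. Rf n k a p = r \<and> r \<noteq> 0} = {p :: real \<times> real \<times> 'z. (fst p - fhat n a (snd (snd p))) * (fst (snd p) - ghat n a (snd (snd p))) * w k (snd (snd p)) = r}"
        using False sets_eq_imp_space_eq[OF P_sets] by (auto simp: Rf_def)
      ultimately show ?thesis by (simp add: null_sets_def)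
    qed
    finally show "(\<integral>\<^sup>+d. G (a, g(0:=d)) \<partial>P) = 0" .
  qed
  also have "\<dots> = 0" by simp
  finally show ?thesis unfolding E_def[symmetric] by (simp add: M.emeasure_eq_measure)
qed

definition Tk where "Tk n k \<omega> = T_stat n (\<lambda>i. Rf n k (aux n \<omega>) (dd n i \<omega>))"

lemma Tk_meas[measurable]: "Tk n k \<in> borel_measurable M"
  unfolding Tk_def T_stat_def Let_def Rf_def by measurable

lemma S_eq: "S_stat K n (fhat n (aux n \<omega>)) (ghat n (aux n \<omega>)) w (\<lambda>i. x n i \<omega>) (\<lambda>i. y n i \<omega>) (\<lambda>i. z n i \<omega>)
   = Max ((\<lambda>k. \<bar>Tk n k \<omega>\<bar>) ` {1..K})"
  unfolding S_stat_def
proof (intro arg_cong[where f=Max] image_cong refl)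
  fix k
  show "\<bar>T_stat n (R_res (fhat n (aux n \<omega>)) (ghat n (aux n \<omega>)) (w k) (\<lambda>i. x n i \<omega>) (\<lambda>i. y n i \<omega>) (\<lambda>i. z n i \<omega>))\<bar> = \<bar>Tk n k \<omega>\<bar>"
    unfolding Tk_def
    by (subst T_stat_cong[where R'="\<lambda>i. Rf n k (aux n \<omega>) (dd n i \<omega>)"])
       (auto simp: R_res_def Rf_def dd_def X_def Y_def Z_def)
qed

lemma S_ge: "L \<le> S_stat K n (fhat n (aux n \<omega>)) (ghat n (aux n \<omega>)) w (\<lambda>i. x n i \<omega>) (\<lambda>i. y n i \<omega>) (\<lambda>i. z n i \<omega>)
   \<longleftrightarrow> (\<exists>k\<in>{1..K}. L \<le> \<bar>Tk n k \<omega>\<bar>)"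
  unfolding S_eq using K by (subst Max_ge_iff) auto

lemma exists_k: "\<exists>k\<in>{1..K}. cc k \<noteq> 0"
proof -
  have "(\<lambda>(x', y', z'). (x' - fP z') * (y' - gP z') * w k z') = Vf k" for k
    by (auto simp: Vf_def fun_eq_iff)
  then show ?thesis using alt by (simp add: cc_def)
qed

lemma good_omega:
  assumes k: "k \<in> {1..K}" and cne: "cc k \<noteq> 0" and n2: "2 \<le> n"
    and t5: "0 < t5"
    and h1: "\<bar>(\<Sum>i<n. Vf k (dd n i \<omega>)) / real n - cc k\<bar> < \<bar>cc k\<bar> / 8"
    and h2: "(\<Sum>i<n. (eps (dd n i \<omega>))\<^sup>2 * (gP (Z n i \<omega>) - ghat n (aux n \<omega>) (Z n i \<omega>))\<^sup>2) / real n < (\<bar>cc k\<bar> / (8 * C))\<^sup>2"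
    and h3: "(\<Sum>i<n. (xi (dd n i \<omega>))\<^sup>2 * (fP (Z n i \<omega>) - fhat n (aux n \<omega>) (Z n i \<omega>))\<^sup>2) / real n < (\<bar>cc k\<bar> / (8 * C))\<^sup>2"
    and h4: "real n * AA n \<omega> < 1"
    and h5: "(\<Sum>i<n. (eps (dd n i \<omega>))\<^sup>2 * (xi (dd n i \<omega>))\<^sup>2) / real n < t5"
    and h6: "\<not> (Rf n k (aux n \<omega>) (dd n 0 \<omega>) = Rf n k (aux n \<omega>) (dd n 1 \<omega>) \<and> Rf n k (aux n \<omega>) (dd n 1 \<omega>) \<noteq> 0)"
    and hC: "C / sqrt (real n) \<le> \<bar>cc k\<bar> / 8"
    and hL: "L \<le> sqrt (real n) * (\<bar>cc k\<bar> / 2) / sqrt (4 * C\<^sup>2 * (t5 + (\<bar>cc k\<bar> / (8 * C))\<^sup>2 + (\<bar>cc k\<bar> / (8 * C))\<^sup>2 + 1))"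
  shows "L \<le> \<bar>Tk n k \<omega>\<bar>"
proof -
  define \<gamma> where "\<gamma> = \<bar>cc k\<bar>"
  define t2 where "t2 = (\<gamma> / (8 * C))\<^sup>2"
  define Q0 where "Q0 = 4 * C\<^sup>2 * (t5 + t2 + t2 + 1)"
  have g0: "0 < \<gamma>" using cne by (simp add: \<gamma>_def)
  have n0: "0 < n" using n2 by simp
  define e where "e i = eps (dd n i \<omega>)" for i
  define xx where "xx i = xi (dd n i \<omega>)" for i
  define a where "a i = fP (Z n i \<omega>) - fhat n (aux n \<omega>) (Z n i \<omega>)" for i
  define b where "b i = gP (Z n i \<omega>) - ghat n (aux n \<omega>) (Z n i \<omega>)" for i
  define W where "W i = w k (Z n i \<omega>)" for i
  define R where "R i = Rf n k (aux n \<omega>) (dd n i \<omega>)" for i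
  have Wb: "\<And>i. i < n \<Longrightarrow> \<bar>W i\<bar> \<le> C" using w_bdd[OF k] by (simp add: W_def)
  have Req: "\<And>i. R i = (e i + a i) * (xx i + b i) * W i"
    by (simp add: R_def Rf_def e_def xx_def a_def b_def W_def dd_def)
  note D1 = det_bounds(1)[where n=n and W=W and C=C and R=R and e=e and a=a and x=xx and b=b and c="cc k", OF n0 Wb Req]
  note D2 = det_bounds(2)[where n=n and W=W and C=C and R=R and e=e and a=a and x=xx and b=b, OF n0 Wb Req]
  have s1: "(\<Sum>i<n. e i * xx i * W i) = (\<Sum>i<n. Vf k (dd n i \<omega>))"
    by (simp add: e_def xx_def W_def Vf_def dd_def)
  have AAeq: "AA n \<omega> = ((\<Sum>i<n. (a i)\<^sup>2) / real n) * ((\<Sum>i<n. (b i)\<^sup>2) / real n)"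
    by (simp add: AA_def a_def b_def)
  have E2: "(\<Sum>i<n. (e i)\<^sup>2 * (b i)\<^sup>2) / real n < t2" using h2 by (simp add: e_def b_def t2_def \<gamma>_def)
  have E3: "(\<Sum>i<n. (xx i)\<^sup>2 * (a i)\<^sup>2) / real n < t2" using h3 by (simp add: xx_def a_def t2_def \<gamma>_def)
  have E5: "(\<Sum>i<n. (e i)\<^sup>2 * (xx i)\<^sup>2) / real n < t5" using h5 by (simp add: e_def xx_def)
  have "sqrt t2 = \<gamma> / (8 * C)" unfolding t2_def using C g0 by (simp only: real_sqrt_abs) simp
  then have sqrt_t2: "C * sqrt t2 = \<gamma> / 8" using C by simp
  have c2: "C * sqrt ((\<Sum>i<n. (e i)\<^sup>2 * (b i)\<^sup>2) / real n) < \<gamma> / 8"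
  proof -
    have "sqrt ((\<Sum>i<n. (e i)\<^sup>2 * (b i)\<^sup>2) / real n) < sqrt t2" using E2 by simp
    then show ?thesis using C sqrt_t2 by (metis mult_strict_left_mono)
  qed
  have c3: "C * sqrt ((\<Sum>i<n. (xx i)\<^sup>2 * (a i)\<^sup>2) / real n) < \<gamma> / 8"
  proof -
    have "sqrt ((\<Sum>i<n. (xx i)\<^sup>2 * (a i)\<^sup>2) / real n) < sqrt t2" using E3 by simp
    then show ?thesis using C sqrt_t2 by (metis mult_strict_left_mono)
  qed
  have c4: "C * sqrt (AA n \<omega>) \<le> \<gamma> / 8"
  proof -
    have "AA n \<omega> < 1 / real n" using h4 n0 by (simp add: field_simps mult.commute)
    then have "sqrt (AA n \<omega>) \<le> sqrt (1 / real n)" by (intro real_sqrt_le_mono) simp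
    then have "sqrt (AA n \<omega>) \<le> 1 / sqrt (real n)" by (simp add: real_sqrt_divide)
    then have "C * sqrt (AA n \<omega>) \<le> C * (1 / sqrt (real n))" using C by (intro mult_left_mono) auto
    moreover have "C * (1 / sqrt (real n)) = C / sqrt (real n)" by simp
    ultimately show ?thesis using hC unfolding \<gamma>_def by linarith
  qed
  have c1: "\<bar>(\<Sum>i<n. e i * xx i * W i) / real n - cc k\<bar> < \<gamma> / 8" using h1 s1 by (simp add: \<gamma>_def)
  define m where "m = (\<Sum>i<n. R i) / real n"
  have "\<bar>m - cc k\<bar> < \<gamma> / 2"
    using D1 c1 c2 c3 c4 unfolding AAeq[symmetric] m_def by linarith
  then have mg: "\<gamma> / 2 \<le> \<bar>m\<bar>" using abs_triangle_ineq2[of "cc k" m] abs_minus_commute[of "cc k" m] unfolding \<gamma>_def by linarith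
  have Qle: "(\<Sum>i<n. (R i)\<^sup>2) / real n \<le> Q0"
  proof -
    have "(\<Sum>i<n. (R i)\<^sup>2) / real n \<le> 4 * C\<^sup>2 * ((\<Sum>i<n. (e i)\<^sup>2 * (xx i)\<^sup>2) / real n
      + (\<Sum>i<n. (e i)\<^sup>2 * (b i)\<^sup>2) / real n + (\<Sum>i<n. (xx i)\<^sup>2 * (a i)\<^sup>2) / real n + real n * AA n \<omega>)"
      using D2 unfolding AAeq .
    also have "\<dots> \<le> Q0" unfolding Q0_def using E2 E3 E5 h4
      by (intro mult_left_mono) auto
    finally show ?thesis .
  qed
  define s2 where "s2 = (\<Sum>i<n. (R i)\<^sup>2) / real n - ((\<Sum>i<n. R i) / real n)\<^sup>2"
  have s2_le: "s2 \<le> Q0" using Qle zero_le_power2[of "(\<Sum>i<n. R i) / real n"] unfolding s2_def by linarith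
  have s2_nn: "0 \<le> s2" unfolding s2_def by (rule var_nonneg[OF n0])
  have s2_ne: "s2 \<noteq> 0"
  proof
    assume s0: "s2 = 0"
    have all: "\<forall>i<n. R i = m" unfolding m_def
      by (rule var_zero[OF n0]) (use s0 in \<open>simp only: s2_def\<close>)
    have r0: "R 0 = m" using all n2 by (metis less_le_trans zero_less_numeral)
    have r1: "R 1 = m" using all n2 by (metis One_nat_def Suc_1 Suc_le_lessD)
    note r0 r1
    moreover have "m \<noteq> 0" using mg g0 by auto
    ultimately show False using h6 by (simp add: R_def)
  qed
  have "sqrt (real n) * (\<gamma> / 2) / sqrt Q0 \<le> \<bar>T_stat n R\<bar>"
    by (rule T_lower[OF n0]) (use s2_nn s2_ne s2_le mg g0 in \<open>auto simp: s2_def m_def\<close>)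
  moreover have "T_stat n R = Tk n k \<omega>" by (simp add: Tk_def R_def[abs_def])
  ultimately show ?thesis using hL by (simp add: \<gamma>_def Q0_def t2_def)
qed

theorem main:
  "\<forall>L>0. (\<lambda>n. measure M {\<omega> \<in> space M.
            S_stat K n (fhat n (aux n \<omega>)) (ghat n (aux n \<omega>)) w
                   (\<lambda>i. x n i \<omega>) (\<lambda>i. y n i \<omega>) (\<lambda>i. z n i \<omega>) \<ge> L}) \<longlonglongrightarrow> 1"
proof (intro allI impI)
  fix L :: real assume "0 < L"
  obtain k where k: "k \<in> {1..K}" and cne: "cc k \<noteq> 0" using exists_k by blast
  define \<gamma> where "\<gamma> = \<bar>cc k\<bar>"
  have g0: "0 < \<gamma>" using cne by (simp add: \<gamma>_def)
  define \<sigma> where "\<sigma> = (\<integral>p. (eps p)\<^sup>2 * (xi p)\<^sup>2 \<partial>P)"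
  have s0: "0 \<le> \<sigma>" unfolding \<sigma>_def by (intro integral_nonneg_AE) simp
  define Sset where "Sset n = {\<omega> \<in> space M. S_stat K n (fhat n (aux n \<omega>)) (ghat n (aux n \<omega>)) w
                   (\<lambda>i. x n i \<omega>) (\<lambda>i. y n i \<omega>) (\<lambda>i. z n i \<omega>) \<ge> L}" for n
  have Sset_eq: "Sset n = {\<omega> \<in> space M. \<exists>k'\<in>{1..K}. L \<le> \<bar>Tk n k' \<omega>\<bar>}" for n
    unfolding Sset_def using S_ge by blast
  have Sset_m: "Sset n \<in> sets M" for n unfolding Sset_eq by measurable
  show "(\<lambda>n. M.prob (Sset n)) \<longlonglongrightarrow> 1" unfolding Sset_def[symmetric]
  proof (rule tendsto1_by_eps)
    fix n show "M.prob (Sset n) \<le> 1" by simp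
  next
    fix r :: real assume r: "0 < r"
    define t5 where "t5 = 4 * (\<sigma> + 1) / r"
    define t2 where "t2 = (\<gamma> / (8 * C))\<^sup>2"
    define Q0 where "Q0 = 4 * C\<^sup>2 * (t5 + t2 + t2 + 1)"
    have t5p: "0 < t5" using r s0 by (simp add: t5_def)
    have t2p: "0 < t2" using g0 C by (simp add: t2_def)
    have Q0p: "0 < Q0" using t5p t2p C by (simp add: Q0_def add_pos_nonneg)
    define E1 where "E1 n = {\<omega>\<in>space M. \<gamma> / 8 \<le> \<bar>(\<Sum>i<n. Vf k (dd n i \<omega>)) / real n - cc k\<bar>}" for n
    define E2 where "E2 n = {\<omega>\<in>space M. t2 \<le> (\<Sum>i<n. (eps (dd n i \<omega>))\<^sup>2 * (gP (Z n i \<omega>) - ghat n (aux n \<omega>) (Z n i \<omega>))\<^sup>2) / real n}" for n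
    define E3 where "E3 n = {\<omega>\<in>space M. t2 \<le> (\<Sum>i<n. (xi (dd n i \<omega>))\<^sup>2 * (fP (Z n i \<omega>) - fhat n (aux n \<omega>) (Z n i \<omega>))\<^sup>2) / real n}" for n
    define E4 where "E4 n = {\<omega>\<in>space M. 1 \<le> real n * AA n \<omega>}" for n
    define E5 where "E5 n = {\<omega>\<in>space M. t5 \<le> (\<Sum>i<n. (eps (dd n i \<omega>))\<^sup>2 * (xi (dd n i \<omega>))\<^sup>2) / real n}" for n
    define E6 where "E6 n = {\<omega>\<in>space M. Rf n k (aux n \<omega>) (dd n 0 \<omega>) = Rf n k (aux n \<omega>) (dd n 1 \<omega>) \<and> Rf n k (aux n \<omega>) (dd n 1 \<omega>) \<noteq> 0}" for n
    have E1m: "E1 n \<in> sets M" for n unfolding E1_def by measurable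
    have E2m: "E2 n \<in> sets M" for n unfolding E2_def by measurable
    have E3m: "E3 n \<in> sets M" for n unfolding E3_def by measurable
    have E4m: "E4 n \<in> sets M" for n unfolding E4_def by measurable
    have E5m: "E5 n \<in> sets M" for n unfolding E5_def by measurable
    have E6m: "E6 n \<in> sets M" for n unfolding E6_def Rf_def by measurable
    have ev1: "eventually (\<lambda>n. M.prob (E1 n) < r / 8) sequentially"
      using order_tendstoD(2)[OF mean_conv[OF k, of "\<gamma> / 8"], of "r / 8"] g0 r unfolding E1_def by simp
    have ev2: "eventually (\<lambda>n. M.prob (E2 n) < r / 8) sequentially"
      using order_tendstoD(2)[OF EBg_conv[OF t2p], of "r / 8"] r unfolding E2_def by simp
    have ev3: "eventually (\<lambda>n. M.prob (E3 n) < r / 8) sequentially"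
      using order_tendstoD(2)[OF EBf_conv[OF t2p], of "r / 8"] r unfolding E3_def by simp
    have ev4: "eventually (\<lambda>n. M.prob (E4 n) < r / 8) sequentially"
      using order_tendstoD(2)[OF AA_conv, of "r / 8"] r unfolding E4_def by simp
    have p5: "M.prob (E5 n) < r / 4" for n
    proof -
      have "M.prob (E5 n) \<le> \<sigma> / t5" unfolding E5_def \<sigma>_def by (rule exi_markov[OF t5p])
      also have "\<sigma> / t5 = \<sigma> * r / (4 * (\<sigma> + 1))" using r s0 by (simp add: t5_def field_simps)
      also have "\<dots> < r / 4" using r s0 by (simp add: field_simps)
      finally show ?thesis .
    qed
    have p6: "2 \<le> n \<Longrightarrow> M.prob (E6 n) = 0" for n unfolding E6_def by (rule R_null)
    have evC: "eventually (\<lambda>n. 8 * C / \<gamma> \<le> sqrt (real n)) sequentially" by (rule ev_sqrt_ge)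
    have evL: "eventually (\<lambda>n. 2 * L * sqrt Q0 / \<gamma> \<le> sqrt (real n)) sequentially" by (rule ev_sqrt_ge)
    have ev2n: "eventually (\<lambda>n. 2 \<le> n) sequentially" by (rule eventually_ge_at_top)
    show "eventually (\<lambda>n. 1 - r \<le> M.prob (Sset n)) sequentially"
      using ev1 ev2 ev3 ev4 evC evL ev2n
    proof eventually_elim
      case (elim n)
      have n0: "0 < n" using elim by simp
      have sq0: "0 < sqrt (real n)" using n0 by simp
      have hC: "C / sqrt (real n) \<le> \<bar>cc k\<bar> / 8"
      proof -
        have "8 * C \<le> \<gamma> * sqrt (real n)" using elim(5) g0 by (simp add: field_simps)
        then show ?thesis using sq0 by (simp add: \<gamma>_def field_simps)
      qed
      have hL: "L \<le> sqrt (real n) * (\<bar>cc k\<bar> / 2) / sqrt (4 * C\<^sup>2 * (t5 + (\<bar>cc k\<bar> / (8 * C))\<^sup>2 + (\<bar>cc k\<bar> / (8 * C))\<^sup>2 + 1))"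
      proof -
        have "2 * L * sqrt Q0 \<le> sqrt (real n) * \<gamma>" using elim(6) g0 by (simp add: field_simps)
        then have "L \<le> sqrt (real n) * (\<gamma> / 2) / sqrt Q0" using Q0p by (simp add: field_simps)
        then show ?thesis by (simp add: Q0_def t2_def \<gamma>_def)
      qed
      have sub: "space M - Sset n \<subseteq> E1 n \<union> (E2 n \<union> (E3 n \<union> (E4 n \<union> (E5 n \<union> E6 n))))"
      proof
        fix \<omega> assume om: "\<omega> \<in> space M - Sset n"
        show "\<omega> \<in> E1 n \<union> (E2 n \<union> (E3 n \<union> (E4 n \<union> (E5 n \<union> E6 n))))"
        proof (rule ccontr)
          assume nE: "\<omega> \<notin> E1 n \<union> (E2 n \<union> (E3 n \<union> (E4 n \<union> (E5 n \<union> E6 n))))"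
          have oms: "\<omega> \<in> space M" using om by simp
          have "L \<le> \<bar>Tk n k \<omega>\<bar>"
          proof (rule good_omega[OF k cne elim(7) t5p _ _ _ _ _ _ hC hL])
            show "\<bar>(\<Sum>i<n. Vf k (dd n i \<omega>)) / real n - cc k\<bar> < \<bar>cc k\<bar> / 8"
              using nE oms by (auto simp: E1_def \<gamma>_def)
            show "(\<Sum>i<n. (eps (dd n i \<omega>))\<^sup>2 * (gP (Z n i \<omega>) - ghat n (aux n \<omega>) (Z n i \<omega>))\<^sup>2) / real n < (\<bar>cc k\<bar> / (8 * C))\<^sup>2"
              using nE oms by (auto simp: E2_def t2_def \<gamma>_def)
            show "(\<Sum>i<n. (xi (dd n i \<omega>))\<^sup>2 * (fP (Z n i \<omega>) - fhat n (aux n \<omega>) (Z n i \<omega>))\<^sup>2) / real n < (\<bar>cc k\<bar> / (8 * C))\<^sup>2"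
              using nE oms by (auto simp: E3_def t2_def \<gamma>_def)
            show "real n * AA n \<omega> < 1" using nE oms by (auto simp: E4_def)
            show "(\<Sum>i<n. (eps (dd n i \<omega>))\<^sup>2 * (xi (dd n i \<omega>))\<^sup>2) / real n < t5"
              using nE oms by (auto simp: E5_def)
            show "\<not> (Rf n k (aux n \<omega>) (dd n 0 \<omega>) = Rf n k (aux n \<omega>) (dd n 1 \<omega>) \<and> Rf n k (aux n \<omega>) (dd n 1 \<omega>) \<noteq> 0)"
              using nE oms by (auto simp: E6_def)
          qed
          then have "\<omega> \<in> Sset n" using oms k unfolding Sset_eq by blast
          then show False using om by simp
        qed
      qed
      have "M.prob (space M - Sset n) \<le> M.prob (E1 n) + (M.prob (E2 n) + (M.prob (E3 n) + (M.prob (E4 n) + (M.prob (E5 n) + M.prob (E6 n)))))"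
      proof -
        have a5: "M.prob (E5 n \<union> E6 n) \<le> M.prob (E5 n) + M.prob (E6 n)"
          by (rule M.prob_le_union) (auto intro!: sets.Un simp: E5m E6m)
        have a4: "M.prob (E4 n \<union> (E5 n \<union> E6 n)) \<le> M.prob (E4 n) + M.prob (E5 n \<union> E6 n)"
          by (rule M.prob_le_union) (auto intro!: sets.Un simp: E4m E5m E6m)
        have a3: "M.prob (E3 n \<union> (E4 n \<union> (E5 n \<union> E6 n))) \<le> M.prob (E3 n) + M.prob (E4 n \<union> (E5 n \<union> E6 n))"
          by (rule M.prob_le_union) (auto intro!: sets.Un simp: E3m E4m E5m E6m)
        have a2: "M.prob (E2 n \<union> (E3 n \<union> (E4 n \<union> (E5 n \<union> E6 n)))) \<le> M.prob (E2 n) + M.prob (E3 n \<union> (E4 n \<union> (E5 n \<union> E6 n)))"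
          by (rule M.prob_le_union) (auto intro!: sets.Un simp: E2m E3m E4m E5m E6m)
        have a1: "M.prob (space M - Sset n) \<le> M.prob (E1 n) + M.prob (E2 n \<union> (E3 n \<union> (E4 n \<union> (E5 n \<union> E6 n))))"
          by (rule M.prob_le_union[OF sub]) (auto intro!: sets.Un simp: E1m E2m E3m E4m E5m E6m)
        show ?thesis using a1 a2 a3 a4 a5 by linarith
      qed
      also have "\<dots> < r" using elim(1-4) p5[of n] p6[OF elim(7)] r by linarith
      finally have "M.prob (space M - Sset n) < r" .
      moreover have "M.prob (space M - Sset n) = 1 - M.prob (Sset n)" using Sset_m by (rule M.prob_compl)
      ultimately show "1 - r \<le> M.prob (Sset n)" by linarith
    qed
  qed
qed

end


theorem corollary2:
  fixes M :: "'a measure"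
    and P :: "(real \<times> real \<times> 'z::euclidean_space) measure"
    and x y :: "nat \<Rightarrow> nat \<Rightarrow> 'a \<Rightarrow> real"
    and z :: "nat \<Rightarrow> nat \<Rightarrow> 'a \<Rightarrow> 'z"
    and N :: "nat \<Rightarrow> 'b measure"
    and aux :: "nat \<Rightarrow> 'a \<Rightarrow> 'b"
    and fhat ghat :: "nat \<Rightarrow> 'b \<Rightarrow> 'z \<Rightarrow> real"
    and fP gP uP vP :: "'z \<Rightarrow> real"
    and w :: "nat \<Rightarrow> 'z \<Rightarrow> real"
    and K :: nat and C :: real
  assumes M: "prob_space M"
    \<comment> \<open>P in E_0: a Borel probability law absolutely continuous w.r.t. Lebesgue measure\<close>
    and P_prob: "prob_space P" and P_sets: "sets P = sets borel"
    and P_ac: "absolutely_continuous lborel P"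
    \<comment> \<open>f_P, g_P, u_P, v_P (versions of the conditional expectations)\<close>
    and fP: "is_cond_exp_fun P (\<lambda>(x', y', z'). x') (\<lambda>(x', y', z'). z') fP"
    and gP: "is_cond_exp_fun P (\<lambda>(x', y', z'). y') (\<lambda>(x', y', z'). z') gP"
    and uP: "is_cond_exp_fun_nonneg P (\<lambda>(x', y', z'). (x' - fP z')\<^sup>2) (\<lambda>(x', y', z'). z') uP"
    and vP: "is_cond_exp_fun_nonneg P (\<lambda>(x', y', z'). (y' - gP z')\<^sup>2) (\<lambda>(x', y', z'). z') vP"
    \<comment> \<open>for each n, (x_{n,i}, y_{n,i}, z_{n,i}), i < n, are i.i.d. with law P\<close>
    and data_rv: "\<And>n i. i < n \<Longrightarrow> (\<lambda>\<omega>. (x n i \<omega>, y n i \<omega>, z n i \<omega>)) \<in> borel_measurable M"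
    and data_law: "\<And>n i. i < n \<Longrightarrow> distr M borel (\<lambda>\<omega>. (x n i \<omega>, y n i \<omega>, z n i \<omega>)) = P"
    and data_indep: "\<And>n. prob_space.indep_vars M (\<lambda>_. borel)
                        (\<lambda>i \<omega>. (x n i \<omega>, y n i \<omega>, z n i \<omega>)) {..<n}"
    \<comment> \<open>fhat, ghat are (measurable) functions of auxiliary data independent of the sample\<close>
    and aux_rv: "\<And>n. aux n \<in> measurable M (N n)"
    and fhat_meas: "\<And>n. case_prod (fhat n) \<in> borel_measurable (N n \<Otimes>\<^sub>M borel)"
    and ghat_meas: "\<And>n. case_prod (ghat n) \<in> borel_measurable (N n \<Otimes>\<^sub>M borel)"
    and aux_indep: "\<And>n. prob_space.indep_set M
        (sigma_sets (space M) {aux n -` A \<inter> space M | A. A \<in> sets (N n)})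
        (sigma_sets (space M)
           {(\<lambda>\<omega>. \<lambda>i\<in>{..<n}. (x n i \<omega>, y n i \<omega>, z n i \<omega>)) -` A \<inter> space M
             | A. A \<in> sets (Pi\<^sub>M {..<n} (\<lambda>_. borel))})"
    \<comment> \<open>weights\<close>
    and K: "1 \<le> K"
    and w_meas: "\<And>k. w k \<in> borel_measurable borel"
    and C: "C > 0" and w_bdd: "\<And>k zz. k \<in> {1..K} \<Longrightarrow> \<bar>w k zz\<bar> \<le> C"
    \<comment> \<open>rate conditions\<close>
    and AfAg: "small_oP M
        (\<lambda>n \<omega>. ((\<Sum>i<n. (fP (z n i \<omega>) - fhat n (aux n \<omega>) (z n i \<omega>))\<^sup>2) / real n) *
               ((\<Sum>i<n. (gP (z n i \<omega>) - ghat n (aux n \<omega>) (z n i \<omega>))\<^sup>2) / real n))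
        (\<lambda>n. 1 / real n)"
    and Bf: "small_oP M
        (\<lambda>n \<omega>. (\<Sum>i<n. (fP (z n i \<omega>) - fhat n (aux n \<omega>) (z n i \<omega>))\<^sup>2 * vP (z n i \<omega>)) / real n)
        (\<lambda>n. 1)"
    and Bg: "small_oP M
        (\<lambda>n \<omega>. (\<Sum>i<n. (gP (z n i \<omega>) - ghat n (aux n \<omega>) (z n i \<omega>))\<^sup>2 * uP (z n i \<omega>)) / real n)
        (\<lambda>n. 1)"
    and pos_var: "\<And>k. k \<in> {1..K} \<Longrightarrow>
        (\<integral>(x', y', z'). (x' - fP z')\<^sup>2 * (y' - gP z')\<^sup>2 * (w k z')\<^sup>2 \<partial>P) > 0"
    and fin_mom: "(\<integral>\<^sup>+(x', y', z'). ennreal ((x' - fP z')\<^sup>2 * (y' - gP z')\<^sup>2) \<partial>P) < \<infinity>"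
    \<comment> \<open>alternative: some weighted covariance is nonzero\<close>
    and alt: "\<exists>k \<in> {1..K}. (\<integral>(x', y', z'). (x' - fP z') * (y' - gP z') * w k z' \<partial>P) \<noteq> 0"
  shows "\<forall>L>0. (\<lambda>n. measure M {\<omega> \<in> space M.
            S_stat K n (fhat n (aux n \<omega>)) (ghat n (aux n \<omega>)) w
                   (\<lambda>i. x n i \<omega>) (\<lambda>i. y n i \<omega>) (\<lambda>i. z n i \<omega>) \<ge> L}) \<longlonglongrightarrow> 1"
proof -
  interpret L: cor2 M P x y z N aux fhat ghat fP gP uP vP w K C
    by (rule cor2.intro; fact)
  show ?thesis by (rule L.main)
qed

end
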